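(* Let $(\Omega,\mathcal{F},P)$ be a probability space with expectation $E$, and let $\{Z_i\}_{i=1}^\infty$ and $\{K_i\}_{i=1}^\infty$ be two i.i.d. sequences of real random variables on it, with the sequence $\{Z_i\}_{i=1}^\infty$ independent of the sequence $\{K_i\}_{i=1}^\infty$. Assume $E[|Z_1|^2]=\sigma^2>0$, $E[K_1]=0$, $E[|K_1|^2]=k^2>0$, and $E[|Z_1|^{2+2\alpha}]\vee E[|K_1|^{2+2\alpha}]<\infty$ for a given $\alpha\in(0,1]$. Let $\tilde{\mathcal{F}}_0:=\{\emptyset,\Omega\}$ and $\tilde{\mathcal{F}}_i:=\sigma(Z_1,\dots,Z_i,K_1,\dots,K_i)$ for $i\ge 1$. Let $0<\underline{\zeta}<\overline{\zeta}$ be constants and let $\tilde{\Sigma}[\underline{\zeta},\overline{\zeta}]$ be the collection of all sequences $\zeta=\{\zeta_i\}_{i=1}^\infty$ that are predictable with respect to $\{\tilde{\mathcal{F}}_i\}_{i\ge0}$ (i.e. $\zeta_i$ is $\tilde{\mathcal{F}}_{i-1}$-measurable for each $i\ge1$) and take values in $[\underline{\zeta},\overline{\zeta}]$. For $\zeta\in\tilde{\Sigma}[\underline{\zeta},\overline{\zeta}]$ and $n\in\mathbb{N}$, set $Z_i^\zeta:=(\zeta_iZ_i+K_i)^2$ and $W_{n,n}^\zeta:=\frac{Z_1^\zeta+\cdots+Z_n^\zeta}{n}$. Then for every Lipschitz continuous $\varphi:\mathbb{R}\to\mathbb{R}$ with Lipschitz constant $L_\varphi$ and every $n\in\mathbb{N}$,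 \[ \Bigg|\sup_{\zeta\in\tilde{\Sigma}[\underline{\zeta},\overline{\zeta}]}E[\varphi(W_{n,n}^\zeta)]-\max_{r\in[\sigma^2\underline{\zeta}^2+k^2,\ \sigma^2\overline{\zeta}^2+k^2]}\varphi(r)\Bigg|\leq L_\varphi\left(\frac{4\tilde{C}_\alpha}{n^\alpha}\right)^{\frac{1}{1+\alpha}}, \] where $\tilde{C}_\alpha:=\sup_{\zeta\in\tilde{\Sigma}[\underline{\zeta},\overline{\zeta}]} E[|Z_1^\zeta|^{1+\alpha}]$ satisfies $\tilde C_\alpha\leq 8\overline{\zeta}^{2+2\alpha} E[|Z_1|^{2+2\alpha}]+8E[|K_1|^{2+2\alpha}]<\infty$.
   Context: $a\vee b$ denotes $\max(a,b)$. A predictable sequence has $\zeta_1$ measurable with respect to the trivial $\sigma$-algebra, i.e. $\zeta_1$ is a constant in $[\underline\zeta,\overline\zeta]$. *)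

theory Defs
  imports "HOL-Probability.Probability"
begin

definition Ftil :: "'a measure \<Rightarrow> (nat \<Rightarrow> 'a \<Rightarrow> real) \<Rightarrow> (nat \<Rightarrow> 'a \<Rightarrow> real) \<Rightarrow> nat \<Rightarrow> 'a set set" where
  "Ftil M Z K i = sigma_sets (space M)
     (\<Union>j\<in>{1..i}. {Z j -` B \<inter> space M | B. B \<in> sets borel} \<union> {K j -` B \<inter> space M | B. B \<in> sets borel})"

definition SigmaTil :: "'a measure \<Rightarrow> (nat \<Rightarrow> 'a \<Rightarrow> real) \<Rightarrow> (nat \<Rightarrow> 'a \<Rightarrow> real) \<Rightarrow> real \<Rightarrow> real \<Rightarrow> (nat \<Rightarrow> 'a \<Rightarrow> real) set" where
  "SigmaTil M Z K lo hi = {\<zeta>. \<forall>i\<ge>1.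
       (\<forall>B\<in>sets borel. \<zeta> i -` B \<inter> space M \<in> Ftil M Z K (i - 1))
     \<and> (\<forall>\<omega>\<in>space M. lo \<le> \<zeta> i \<omega> \<and> \<zeta> i \<omega> \<le> hi)}"

definition Zzeta :: "(nat \<Rightarrow> 'a \<Rightarrow> real) \<Rightarrow> (nat \<Rightarrow> 'a \<Rightarrow> real) \<Rightarrow> (nat \<Rightarrow> 'a \<Rightarrow> real) \<Rightarrow> nat \<Rightarrow> 'a \<Rightarrow> real" where
  "Zzeta Z K \<zeta> i \<omega> = (\<zeta> i \<omega> * Z i \<omega> + K i \<omega>)^2"

definition Wnn :: "(nat \<Rightarrow> 'a \<Rightarrow> real) \<Rightarrow> (nat \<Rightarrow> 'a \<Rightarrow> real) \<Rightarrow> (nat \<Rightarrow> 'a \<Rightarrow> real) \<Rightarrow> nat \<Rightarrow> 'a \<Rightarrow> real" where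
  "Wnn Z K \<zeta> n \<omega> = (\<Sum>i=1..n. Zzeta Z K \<zeta> i \<omega>) / real n"

end

theory Submission
  imports Defs "HOL-Probability.Probability"
begin


lemma powr_subadd:
  fixes q x y :: real
  assumes q: "0 \<le> q" "q \<le> 1" and x: "0 \<le> x" and y: "0 \<le> y"
  shows "(x + y) powr q \<le> x powr q + y powr q"
proof (cases "x + y = 0")
  case True then show ?thesis using x y by auto
next
  case False
  define s where "s = x + y"
  have s: "s > 0" using False x y s_def by auto
  have u: "u \<le> u powr q" if "0 \<le> u" "u \<le> 1" for u :: real
  proof (cases "u = 0")
    case True then show ?thesis by simp
  next
    case False
    then have "u powr 1 \<le> u powr q" using powr_mono'[of q 1 u] that q by auto
    then show ?thesis using False that by simp
  qed
  have "1 = x / s + y / s" using s by (simp add: s_def add_divide_distrib[symmetric])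
  also have "\<dots> \<le> (x/s) powr q + (y/s) powr q"
  proof -
    have hx: "x/s \<le> (x/s) powr q" by (rule u) (use x y s in \<open>auto simp: s_def\<close>)
    have hy: "y/s \<le> (y/s) powr q" by (rule u) (use x y s in \<open>auto simp: s_def\<close>)
    show ?thesis using hx hy by linarith
  qed
  also have "\<dots> = (x powr q + y powr q) / s powr q"
    by (simp add: powr_divide add_divide_distrib)
  finally have "s powr q \<le> x powr q + y powr q" using s by (simp add: field_simps)
  then show ?thesis by (simp add: s_def)
qed

lemma key1:
  fixes p t :: real assumes p: "1 < p" "p \<le> 2"
  shows "\<bar>1 + t\<bar> powr p \<le> 1 + p * t + 2 * \<bar>t\<bar> powr p"
proof -
  have cpow: "continuous_on S (\<lambda>x. g x powr p)" if "continuous_on S g" "\<And>x. x \<in> S \<Longrightarrow> g x \<ge> 0"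
    for S and g :: "real \<Rightarrow> real"
    by (rule continuous_on_powr') (use that p in \<open>auto intro: continuous_intros\<close>)
  consider "t \<ge> 0" | "-1 \<le> t" "t < 0" | "t < -1" by linarith
  then show ?thesis
  proof cases
    case 1
    define f where "f x = 2 * x powr p - (1 + x) powr p + 1 + p * x" for x
    have "f 0 \<le> f t"
    proof (rule DERIV_nonneg_imp_increasing_open[OF 1])
      fix x :: real assume x: "0 < x" "x < t"
      have d: "DERIV f x :> 2 * (p * x powr (p - 1)) - p * (1 + x) powr (p - 1) + p"
        unfolding f_def using x by (auto intro!: derivative_eq_intros)
      have "(1 + x) powr (p - 1) \<le> 1 powr (p - 1) + x powr (p - 1)"
        by (rule powr_subadd) (use p x in auto)
      then have "p * (1 + x) powr (p - 1) \<le> p * (1 + x powr (p - 1))"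
        using p by (intro mult_left_mono) auto
      moreover have "0 \<le> p * x powr (p - 1)" using p by auto
      ultimately have "0 \<le> 2 * (p * x powr (p - 1)) - p * (1 + x) powr (p - 1) + p"
        by (simp add: algebra_simps)
      with d show "\<exists>y. DERIV f x :> y \<and> 0 \<le> y" by blast
    next
      show "continuous_on {0..t} f" unfolding f_def
        by (intro continuous_intros cpow) auto
    qed
    then show ?thesis using 1 p by (simp add: f_def)
  next
    case 2
    define s where "s = - t"
    have s: "0 < s" "s \<le> 1" using 2 s_def by auto
    define f where "f x = 2 * x powr p - (1 - x) powr p + 1 - p * x" for x
    have "f 0 \<le> f s"
    proof (rule DERIV_nonneg_imp_increasing_open[OF less_imp_le[OF s(1)]])
      fix x :: real assume x: "0 < x" "x < s"
      have "DERIV f x :> 2 * (p * x powr (p - 1)) + p * (1 - x) powr (p - 1) - p"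
        unfolding f_def using x s by (auto intro!: derivative_eq_intros)
      note d = this
      have "(x + (1 - x)) powr (p - 1) \<le> x powr (p - 1) + (1 - x) powr (p - 1)"
        by (rule powr_subadd) (use p x s in auto)
      then have "p * 1 \<le> p * (x powr (p - 1) + (1 - x) powr (p - 1))"
        using p x by (intro mult_left_mono) auto
      moreover have "0 \<le> p * x powr (p - 1)" using p by auto
      ultimately have "0 \<le> 2 * (p * x powr (p - 1)) + p * (1 - x) powr (p - 1) - p"
        by (simp add: algebra_simps)
      with d show "\<exists>y. DERIV f x :> y \<and> 0 \<le> y" by blast
    next
      show "continuous_on {0..s} f" unfolding f_def
        by (intro continuous_intros cpow) (use s in auto)
    qed
    moreover have "\<bar>1 + t\<bar> = 1 - s" "\<bar>t\<bar> = s" using s s_def by auto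
    ultimately show ?thesis using p by (simp add: f_def s_def)
  next
    case 3
    define s where "s = - t"
    have s: "1 < s" using 3 s_def by auto
    define f where "f x = 2 * x powr p - (x - 1) powr p + 1 - p * x" for x
    have "f 1 \<le> f s"
    proof (rule DERIV_nonneg_imp_increasing_open[OF less_imp_le[OF s]])
      fix x :: real assume x: "1 < x" "x < s"
      have d: "DERIV f x :> 2 * (p * x powr (p - 1)) - p * (x - 1) powr (p - 1) - p"
        unfolding f_def using x s by (auto intro!: derivative_eq_intros)
      have "(x - 1) powr (p - 1) \<le> x powr (p - 1)"
        by (rule powr_mono2) (use p x s in auto)
      moreover have "1 \<le> x powr (p - 1)" using x p by (simp add: ge_one_powr_ge_zero)
      ultimately have "p * (1 + (x - 1) powr (p - 1)) \<le> p * (2 * x powr (p - 1))"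
        using p by (intro mult_left_mono) auto
      with d show "\<exists>y. DERIV f x :> y \<and> 0 \<le> y"
        by (intro exI[of _ "2 * (p * x powr (p - 1)) - p * (x - 1) powr (p - 1) - p"])
          (auto simp: algebra_simps)
    next
      show "continuous_on {1..s} f" unfolding f_def
        by (intro continuous_intros cpow) (use s in auto)
    qed
    moreover have "f 1 \<ge> 0" using p by (simp add: f_def)
    moreover have "\<bar>1 + t\<bar> = s - 1" "\<bar>t\<bar> = s" using s s_def by auto
    ultimately show ?thesis using p by (simp add: f_def s_def)
  qed
qed

lemma key2:
  fixes p a b :: real assumes p: "1 < p" "p \<le> 2"
  shows "\<bar>a + b\<bar> powr p \<le> \<bar>a\<bar> powr p + p * (sgn a * \<bar>a\<bar> powr (p - 1)) * b + 2 * \<bar>b\<bar> powr p"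
proof (cases "a = 0")
  case True then show ?thesis by simp
next
  case False
  define t where "t = b / a"
  have b: "b = a * t" using False t_def by simp
  have pa: "\<bar>a\<bar> powr p > 0" using False by simp
  have "\<bar>a + b\<bar> powr p = \<bar>a\<bar> powr p * \<bar>1 + t\<bar> powr p"
    by (simp add: b abs_mult[symmetric] powr_mult[symmetric] algebra_simps)
  also have "\<dots> \<le> \<bar>a\<bar> powr p * (1 + p * t + 2 * \<bar>t\<bar> powr p)"
    by (rule mult_left_mono[OF key1[OF p]]) simp
  also have "\<dots> = \<bar>a\<bar> powr p + p * (\<bar>a\<bar> powr p * t) + 2 * \<bar>b\<bar> powr p"
    by (simp add: b abs_mult powr_mult algebra_simps)
  also have "\<bar>a\<bar> powr p * t = sgn a * \<bar>a\<bar> powr (p - 1) * b"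
  proof -
    have "\<bar>a\<bar> powr p = \<bar>a\<bar> * \<bar>a\<bar> powr (p - 1)"
      using False by (simp add: powr_diff field_simps)
    moreover have "\<bar>a\<bar> * t = sgn a * b" using False
      by (auto simp: b abs_if sgn_if)
    ultimately show ?thesis by (simp add: algebra_simps)
  qed
  finally show ?thesis by (simp add: algebra_simps)
qed

lemma psi_bound:
  fixes p s d :: real assumes p: "1 < p"
  shows "\<bar>sgn s * \<bar>s\<bar> powr (p - 1) * d\<bar> \<le> \<bar>s\<bar> powr p + \<bar>d\<bar> powr p"
proof -
  have "\<bar>sgn s * \<bar>s\<bar> powr (p - 1) * d\<bar> \<le> \<bar>s\<bar> powr (p - 1) * \<bar>d\<bar>"
    by (auto simp: abs_mult sgn_if)
  also have "\<dots> \<le> \<bar>s\<bar> powr p + \<bar>d\<bar> powr p"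
  proof (cases "\<bar>s\<bar> \<le> \<bar>d\<bar>")
    case True
    then have "\<bar>s\<bar> powr (p - 1) * \<bar>d\<bar> \<le> \<bar>d\<bar> powr (p - 1) * \<bar>d\<bar>"
      using p by (intro mult_right_mono powr_mono2) auto
    also have "\<dots> = \<bar>d\<bar> powr p"
      by (cases "d = 0") (simp_all add: powr_diff field_simps)
    finally show ?thesis using powr_ge_zero[of "\<bar>s\<bar>" p] by linarith
  next
    case False
    then have "\<bar>s\<bar> powr (p - 1) * \<bar>d\<bar> \<le> \<bar>s\<bar> powr (p - 1) * \<bar>s\<bar>"
      by (intro mult_left_mono) auto
    also have "\<dots> = \<bar>s\<bar> powr p"
      by (cases "s = 0") (simp_all add: powr_diff field_simps)
    finally show ?thesis using powr_ge_zero[of "\<bar>d\<bar>" p] by linarith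
  qed
  finally show ?thesis .
qed

lemma diff_pow_bound:
  fixes p x m :: real assumes p: "0 \<le> p" and x: "0 \<le> x" and m: "0 \<le> m"
  shows "\<bar>x - m\<bar> powr p \<le> x powr p + m powr p"
proof (cases "x \<le> m")
  case True
  then have "\<bar>x - m\<bar> powr p \<le> m powr p" using x p by (intro powr_mono2) auto
  then show ?thesis by (simp add: add_increasing)
next
  case False
  then have "\<bar>x - m\<bar> powr p \<le> x powr p" using m p by (intro powr_mono2) auto
  then show ?thesis by (simp add: add_increasing2)
qed

lemma convex_pow2:
  fixes q x y :: real assumes q: "1 \<le> q" and x: "0 \<le> x" and y: "0 \<le> y"
  shows "(x + y) powr q \<le> 2 powr (q - 1) * (x powr q + y powr q)"
proof -
  have h1: "1 \<le> 2 powr (q - 1)" using q by (simp add: ge_one_powr_ge_zero)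
  consider "x = 0" | "y = 0" | "x > 0" "y > 0" using x y by linarith
  then show ?thesis
  proof cases
    case 1 then show ?thesis using h1 by (simp add: mult_le_cancel_right1)
  next
    case 2 then show ?thesis using h1 by (simp add: mult_le_cancel_right1)
  next
    case 3
    have "((1 - 1/2) *\<^sub>R x + (1/2) *\<^sub>R y) powr q \<le> (1 - 1/2) * x powr q + (1/2) * y powr q"
      by (rule convex_onD[OF powr_convex[OF q]]) (use 3 in auto)
    then have "((x + y) / 2) powr q \<le> (x powr q + y powr q) / 2" by (simp add: field_simps)
    then have "(x + y) powr q / 2 powr q \<le> (x powr q + y powr q) / 2" by (simp add: powr_divide)
    then have "(x + y) powr q \<le> 2 powr q * ((x powr q + y powr q) / 2)"
      by (simp add: field_simps)
    also have "2 powr q * ((x powr q + y powr q) / 2) = 2 powr (q - 1) * (x powr q + y powr q)"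
      by (simp add: powr_diff field_simps)
    finally show ?thesis .
  qed
qed




locale S3 = prob_space M for M :: "'a measure" +
  fixes Z K :: "nat \<Rightarrow> 'a \<Rightarrow> real" and sigma2 k2 \<alpha> lo hi :: real
  assumes Zrv: "\<And>i. i \<ge> 1 \<Longrightarrow> Z i \<in> borel_measurable M"
    and Krv: "\<And>i. i \<ge> 1 \<Longrightarrow> K i \<in> borel_measurable M"
    and indep: "indep_vars (\<lambda>_. borel)
                  (\<lambda>x. case x of Inl i \<Rightarrow> Z i | Inr i \<Rightarrow> K i)
                  (Inl ` {1..} \<union> Inr ` {1..})"
    and Zid: "\<And>i. i \<ge> 1 \<Longrightarrow> distr M borel (Z i) = distr M borel (Z 1)"
    and Kid: "\<And>i. i \<ge> 1 \<Longrightarrow> distr M borel (K i) = distr M borel (K 1)"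
    and alpha: "0 < \<alpha>" "\<alpha> \<le> 1"
    and Zmom: "integrable M (\<lambda>\<omega>. \<bar>Z 1 \<omega>\<bar> powr (2 + 2 * \<alpha>))"
    and Kmom: "integrable M (\<lambda>\<omega>. \<bar>K 1 \<omega>\<bar> powr (2 + 2 * \<alpha>))"
    and sigma2: "(\<integral>\<omega>. \<bar>Z 1 \<omega>\<bar>^2 \<partial>M) = sigma2" "sigma2 > 0"
    and Kmean: "(\<integral>\<omega>. K 1 \<omega> \<partial>M) = 0"
    and k2: "(\<integral>\<omega>. \<bar>K 1 \<omega>\<bar>^2 \<partial>M) = k2" "k2 > 0"
    and zeta: "0 < lo" "lo < hi"
begin

definition XX :: "nat + nat \<Rightarrow> 'a \<Rightarrow> real" where
  "XX = (\<lambda>x. case x of Inl i \<Rightarrow> Z i | Inr i \<Rightarrow> K i)"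
definition EE :: "nat + nat \<Rightarrow> 'a set set" where
  "EE i = {XX i -` A \<inter> space M | A. A \<in> sets borel}"
definition gen :: "nat \<Rightarrow> 'a set set" where
  "gen j = (\<Union>i\<in>{1..j}. {Z i -` B \<inter> space M | B. B \<in> sets borel} \<union> {K i -` B \<inter> space M | B. B \<in> sets borel})"
definition FM :: "nat \<Rightarrow> 'a measure" where
  "FM j = sigma (space M) (gen j)"

lemma gen_EE: "gen j = (\<Union>i\<in>Inl ` {1..j} \<union> Inr ` {1..j}. EE i)"
  unfolding gen_def EE_def XX_def by (auto simp: UN_Un_distrib)

lemma gen_Pow: "gen j \<subseteq> Pow (space M)"
  unfolding gen_def by auto

lemma sets_FM: "sets (FM j) = Ftil M Z K j"
  unfolding FM_def Ftil_def using gen_Pow[of j] by (simp add: sets_measure_of gen_def)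

lemma space_FM[simp]: "space (FM j) = space M"
  unfolding FM_def using gen_Pow[of j] by (simp add: space_measure_of)

lemma gen_sets: "gen j \<subseteq> sets M"
  unfolding gen_def using Zrv Krv by (auto intro: measurable_sets)

lemma sets_FM_sub: "sets (FM j) \<subseteq> sets M"
  unfolding FM_def using gen_Pow[of j] gen_sets[of j]
  by (simp add: sets_measure_of sets.sigma_sets_subset)

lemma sets_FM_mono: assumes jm: "j \<le> m" shows "sets (FM j) \<subseteq> sets (FM m)"
proof -
  have "gen j \<subseteq> gen m" unfolding gen_def using jm by (intro UN_mono) auto
  then show ?thesis using gen_Pow[of j] gen_Pow[of m]
    by (simp add: FM_def sets_measure_of sigma_sets_subseteq)
qed

lemma FM_mono_meas: "j \<le> m \<Longrightarrow> f \<in> borel_measurable (FM j) \<Longrightarrow> f \<in> borel_measurable (FM m)"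
  using sets_FM_mono[of j m] unfolding measurable_def by auto

lemma FM_meas_M: "f \<in> borel_measurable (FM j) \<Longrightarrow> f \<in> borel_measurable M"
  using sets_FM_sub[of j] unfolding measurable_def by auto

lemma Z_FM: assumes i: "1 \<le> i" "i \<le> j" shows "Z i \<in> borel_measurable (FM j)"
proof -
  have "Z i -` B \<inter> space M \<in> sets (FM j)" if "B \<in> sets borel" for B
  proof -
    have "Z i -` B \<inter> space M \<in> gen j" unfolding gen_def using i that by (intro UN_I[of i]) auto
    then show ?thesis unfolding FM_def using gen_Pow[of j]
      by (subst sets_measure_of) (auto intro!: sigma_sets.Basic)
  qed
  then show ?thesis by (auto simp: measurable_def)
qed

lemma K_FM: assumes i: "1 \<le> i" "i \<le> j" shows "K i \<in> borel_measurable (FM j)"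
proof -
  have "K i -` B \<inter> space M \<in> sets (FM j)" if "B \<in> sets borel" for B
  proof -
    have "K i -` B \<inter> space M \<in> gen j" unfolding gen_def using i that by (intro UN_I[of i]) auto
    then show ?thesis unfolding FM_def using gen_Pow[of j]
      by (subst sets_measure_of) (auto intro!: sigma_sets.Basic)
  qed
  then show ?thesis by (auto simp: measurable_def)
qed

lemma zeta_FM: "\<zeta> \<in> SigmaTil M Z K lo hi \<Longrightarrow> 1 \<le> i \<Longrightarrow> \<zeta> i \<in> borel_measurable (FM (i - 1))"
  unfolding SigmaTil_def measurable_def by (auto simp: sets_FM)

lemma zeta_bd: "\<zeta> \<in> SigmaTil M Z K lo hi \<Longrightarrow> 1 \<le> i \<Longrightarrow> \<omega> \<in> space M \<Longrightarrow> lo \<le> \<zeta> i \<omega> \<and> \<zeta> i \<omega> \<le> hi"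
  unfolding SigmaTil_def by auto

lemma const_Sigma: assumes c: "lo \<le> c" "c \<le> hi" shows "(\<lambda>i \<omega>. c) \<in> SigmaTil M Z K lo hi"
proof -
  have "(\<lambda>\<omega>. c) -` B \<inter> space M \<in> Ftil M Z K j" for B j
  proof -
    have "{} \<in> Ftil M Z K j" "space M \<in> Ftil M Z K j"
      unfolding Ftil_def by (auto intro: sigma_sets.Empty sigma_sets_top)
    then show ?thesis by (cases "c \<in> B") auto
  qed
  then show ?thesis using c unfolding SigmaTil_def by auto
qed

lemma indep_two:
  assumes AB: "A \<inter> B = {}" "A \<union> B \<subseteq> Inl ` {1..} \<union> Inr ` {1..}"
  shows "indep_set (sigma_sets (space M) (\<Union>i\<in>A. EE i)) (sigma_sets (space M) (\<Union>i\<in>B. EE i))"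
proof -
  have "indep_sets EE (Inl ` {1..} \<union> Inr ` {1..})"
    using indep unfolding indep_vars_def2 EE_def XX_def by simp
  then have "indep_sets EE (\<Union>j\<in>UNIV. case_bool A B j)"
  proof (rule indep_sets_mono_index[rotated])
    have "(\<Union>j\<in>UNIV. case_bool A B j) = A \<union> B" by (auto simp: UNIV_bool)
    then show "(\<Union>j\<in>UNIV. case_bool A B j) \<subseteq> Inl ` {1..} \<union> Inr ` {1..}" using AB by simp
  qed
  then have "indep_sets (\<lambda>j. sigma_sets (space M) (\<Union>i\<in>case_bool A B j. EE i)) UNIV"
  proof (rule indep_sets_collect_sigma)
    show "Int_stable (EE i)" for i
      unfolding EE_def Int_stable_def
    proof clarsimp
      fix A B :: "real set" assume "A \<in> sets borel" "B \<in> sets borel"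
      then show "\<exists>C. XX i -` A \<inter> space M \<inter> (XX i -` B \<inter> space M) = XX i -` C \<inter> space M \<and> C \<in> sets borel"
        by (intro exI[of _ "A \<inter> B"]) auto
    qed
    show "disjoint_family_on (case_bool A B) UNIV"
      using AB by (auto simp: disjoint_family_on_def split: bool.split)
  qed
  moreover have "(\<lambda>j. sigma_sets (space M) (\<Union>i\<in>case_bool A B j. EE i)) =
      case_bool (sigma_sets (space M) (\<Union>i\<in>A. EE i)) (sigma_sets (space M) (\<Union>i\<in>B. EE i))"
    by (rule ext) (simp split: bool.split)
  ultimately show ?thesis unfolding indep_set_def by simp
qed

lemma indep_var_from_sets:
  fixes V Y :: "'a \<Rightarrow> 'b::topological_space"
  assumes ind: "indep_set (sets N1) (sets N2)"
    and sp: "space N1 = space M" "space N2 = space M"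
    and V: "V \<in> borel_measurable N1" and Y: "Y \<in> borel_measurable N2"
    and VM: "V \<in> borel_measurable M" and YM: "Y \<in> borel_measurable M"
  shows "indep_var borel V borel Y"
  unfolding indep_var_eq
proof (intro conjI)
  show "random_variable borel V" "random_variable borel Y" using VM YM by auto
  have s1: "sigma_sets (space M) {V -` A \<inter> space M |A. A \<in> sets borel} \<subseteq> sets N1"
  proof -
    have "{V -` A \<inter> space M |A. A \<in> sets borel} \<subseteq> sets N1"
      using V sp(1) by (auto dest: measurable_sets)
    from sets.sigma_sets_subset[OF this] show ?thesis using sp(1) by simp
  qed
  have s2: "sigma_sets (space M) {Y -` A \<inter> space M |A. A \<in> sets borel} \<subseteq> sets N2"
  proof -
    have "{Y -` A \<inter> space M |A. A \<in> sets borel} \<subseteq> sets N2"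
      using Y sp(2) by (auto dest: measurable_sets)
    from sets.sigma_sets_subset[OF this] show ?thesis using sp(2) by simp
  qed
  show "indep_set (sigma_sets (space M) {V -` A \<inter> space M |A. A \<in> sets borel})
     (sigma_sets (space M) {Y -` A \<inter> space M |A. A \<in> sets borel})"
    using ind unfolding indep_set_def
    by (rule indep_sets_mono_sets) (use s1 s2 in \<open>auto split: bool.split\<close>)
qed

end



lemma (in prob_space) fubini_indep:
  fixes V Y :: "'a \<Rightarrow> real \<times> real" and F :: "(real \<times> real) \<times> (real \<times> real) \<Rightarrow> real"
  assumes ind: "indep_var borel V borel Y" and F: "F \<in> borel_measurable borel"
    and int: "integrable M (\<lambda>\<omega>. F (V \<omega>, Y \<omega>))"
  shows "(\<integral>\<omega>. F (V \<omega>, Y \<omega>) \<partial>M) = (\<integral>\<omega>. (\<integral>y. F (V \<omega>, y) \<partial>distr M borel Y) \<partial>M)"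
proof -
  have V: "V \<in> borel_measurable M" and Y: "Y \<in> borel_measurable M"
    using indep_var_rv1[OF ind] indep_var_rv2[OF ind] by auto
  let ?PV = "distr M borel V" and ?PY = "distr M borel Y"
  interpret PV: prob_space ?PV by (rule prob_space_distr[OF V])
  interpret PY: prob_space ?PY by (rule prob_space_distr[OF Y])
  interpret P: pair_prob_space ?PV ?PY by unfold_locales
  have eq: "?PV \<Otimes>\<^sub>M ?PY = distr M (borel \<Otimes>\<^sub>M borel) (\<lambda>x. (V x, Y x))"
    using ind indep_var_distribution_eq by auto
  have Fm: "F \<in> borel_measurable (borel \<Otimes>\<^sub>M borel)" using F by (simp add: borel_prod)
  have VYm: "(\<lambda>x. (V x, Y x)) \<in> measurable M (borel \<Otimes>\<^sub>M borel)"
    using V Y by (auto intro: measurable_Pair)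
  have intP: "integrable (?PV \<Otimes>\<^sub>M ?PY) F"
    unfolding eq using integrable_distr_eq[OF VYm Fm] int by simp
  have Fm2: "(\<lambda>(v, y). F (v, y)) \<in> borel_measurable (borel \<Otimes>\<^sub>M ?PY)"
  proof -
    have "F \<in> borel_measurable (borel \<Otimes>\<^sub>M ?PY)"
      by (subst measurable_cong_sets[OF sets_pair_measure_cong[OF refl sets_distr] refl]) (rule Fm)
    then show ?thesis by simp
  qed
  have "(\<integral>\<omega>. F (V \<omega>, Y \<omega>) \<partial>M) = integral\<^sup>L (?PV \<Otimes>\<^sub>M ?PY) F"
    unfolding eq by (rule integral_distr[symmetric, OF VYm Fm])
  also have "\<dots> = (\<integral>v. (\<integral>y. F (v, y) \<partial>?PY) \<partial>?PV)"
    by (rule P.integral_fst'[OF intP, symmetric])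
  also have "\<dots> = (\<integral>\<omega>. (\<integral>y. F (V \<omega>, y) \<partial>?PY) \<partial>M)"
    by (rule integral_distr[OF V PY.borel_measurable_lebesgue_integral[OF Fm2]])
  finally show ?thesis .
qed

context S3 begin

definition GM :: "(nat + nat) set \<Rightarrow> 'a measure" where
  "GM A = sigma (space M) (\<Union>i\<in>A. EE i)"

lemma EE_Pow: "(\<Union>i\<in>A. EE i) \<subseteq> Pow (space M)"
  unfolding EE_def by auto

lemma sets_GM: "sets (GM A) = sigma_sets (space M) (\<Union>i\<in>A. EE i)"
  unfolding GM_def using EE_Pow by (simp add: sets_measure_of)

lemma space_GM[simp]: "space (GM A) = space M"
  unfolding GM_def using EE_Pow by (simp add: space_measure_of)

lemma XX_GM: assumes "i \<in> A" shows "XX i \<in> borel_measurable (GM A)"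
proof -
  have "XX i -` B \<inter> space M \<in> sets (GM A)" if "B \<in> sets borel" for B
  proof -
    have "XX i -` B \<inter> space M \<in> (\<Union>i\<in>A. EE i)" unfolding EE_def using assms that by blast
    then show ?thesis unfolding sets_GM by (auto intro!: sigma_sets.Basic)
  qed
  then show ?thesis by (auto simp: measurable_def)
qed

lemma FM_GM: "FM j = GM (Inl ` {1..j} \<union> Inr ` {1..j})"
  unfolding FM_def GM_def gen_EE ..

lemma indep_GM:
  assumes AB: "A \<inter> B = {}" "A \<union> B \<subseteq> Inl ` {1..} \<union> Inr ` {1..}"
  shows "indep_set (sets (GM A)) (sets (GM B))"
  unfolding sets_GM by (rule indep_two[OF AB])

lemma indep_ZK: assumes k: "1 \<le> k" shows "indep_var borel (Z k) borel (K k)"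
proof (rule indep_var_from_sets[OF indep_GM[of "{Inl k}" "{Inr k}"]])
  show "Z k \<in> borel_measurable (GM {Inl k})" using XX_GM[of "Inl k" "{Inl k}"] by (simp add: XX_def)
  show "K k \<in> borel_measurable (GM {Inr k})" using XX_GM[of "Inr k" "{Inr k}"] by (simp add: XX_def)
qed (use k Zrv Krv in auto)

lemma YK_GM: assumes k: "1 \<le> k" shows "(\<lambda>\<omega>. (Z k \<omega>, K k \<omega>)) \<in> borel_measurable (GM {Inl k, Inr k})"
proof -
  have "Z k \<in> borel_measurable (GM {Inl k, Inr k})" using XX_GM[of "Inl k" "{Inl k, Inr k}"] by (simp add: XX_def)
  moreover have "K k \<in> borel_measurable (GM {Inl k, Inr k})" using XX_GM[of "Inr k" "{Inl k, Inr k}"] by (simp add: XX_def)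
  ultimately show ?thesis by (rule borel_measurable_Pair)
qed

lemma indep_VY:
  fixes V :: "'a \<Rightarrow> real \<times> real"
  assumes k: "1 \<le> k" and V: "V \<in> borel_measurable (FM (k - 1))"
  shows "indep_var borel V borel (\<lambda>\<omega>. (Z k \<omega>, K k \<omega>))"
proof (rule indep_var_from_sets[OF indep_GM[of "Inl ` {1..k-1} \<union> Inr ` {1..k-1}" "{Inl k, Inr k}"]])
  show "V \<in> borel_measurable (GM (Inl ` {1..k - 1} \<union> Inr ` {1..k - 1}))" using V by (simp add: FM_GM)
  show "(\<lambda>\<omega>. (Z k \<omega>, K k \<omega>)) \<in> borel_measurable (GM {Inl k, Inr k})" by (rule YK_GM[OF k])
  show "V \<in> borel_measurable M" using V by (rule FM_meas_M)
  show "(\<lambda>\<omega>. (Z k \<omega>, K k \<omega>)) \<in> borel_measurable M" using k Zrv Krv by auto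
qed (use k in auto)

lemma pair_distr: assumes k: "1 \<le> k"
  shows "distr M borel (\<lambda>\<omega>. (Z k \<omega>, K k \<omega>)) = distr M borel (\<lambda>\<omega>. (Z 1 \<omega>, K 1 \<omega>))"
proof -
  have "distr M borel (\<lambda>\<omega>. (Z j \<omega>, K j \<omega>)) = distr M borel (Z j) \<Otimes>\<^sub>M distr M borel (K j)" if "1 \<le> j" for j
    using indep_ZK[OF that] unfolding indep_var_distribution_eq by (simp add: borel_prod)
  from this[OF k] this[of 1] show ?thesis using Zid[OF k] Kid[OF k] by simp
qed

lemma Z_same:
  fixes f :: "real \<Rightarrow> real"
  assumes k: "1 \<le> k" and f: "f \<in> borel_measurable borel"
  shows "integrable M (\<lambda>x. f (Z k x)) \<longleftrightarrow> integrable M (\<lambda>x. f (Z 1 x))"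
    and "(\<integral>x. f (Z k x) \<partial>M) = (\<integral>x. f (Z 1 x) \<partial>M)"
proof -
  have m: "Z k \<in> measurable M borel" "Z 1 \<in> measurable M borel" using k Zrv by auto
  show "integrable M (\<lambda>x. f (Z k x)) \<longleftrightarrow> integrable M (\<lambda>x. f (Z 1 x))"
    using integrable_distr_eq[OF m(1) f] integrable_distr_eq[OF m(2) f] Zid[OF k] by simp
  show "(\<integral>x. f (Z k x) \<partial>M) = (\<integral>x. f (Z 1 x) \<partial>M)"
    using integral_distr[OF m(1) f] integral_distr[OF m(2) f] Zid[OF k] by simp
qed

lemma K_same:
  fixes f :: "real \<Rightarrow> real"
  assumes k: "1 \<le> k" and f: "f \<in> borel_measurable borel"
  shows "integrable M (\<lambda>x. f (K k x)) \<longleftrightarrow> integrable M (\<lambda>x. f (K 1 x))"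
    and "(\<integral>x. f (K k x) \<partial>M) = (\<integral>x. f (K 1 x) \<partial>M)"
proof -
  have m: "K k \<in> measurable M borel" "K 1 \<in> measurable M borel" using k Krv by auto
  show "integrable M (\<lambda>x. f (K k x)) \<longleftrightarrow> integrable M (\<lambda>x. f (K 1 x))"
    using integrable_distr_eq[OF m(1) f] integrable_distr_eq[OF m(2) f] Kid[OF k] by simp
  show "(\<integral>x. f (K k x) \<partial>M) = (\<integral>x. f (K 1 x) \<partial>M)"
    using integral_distr[OF m(1) f] integral_distr[OF m(2) f] Kid[OF k] by simp
qed

end



lemma integrable_dom:
  fixes f g :: "'a \<Rightarrow> real"
  assumes "integrable M f" "g \<in> borel_measurable M" "\<And>x. x \<in> space M \<Longrightarrow> \<bar>g x\<bar> \<le> f x"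
  shows "integrable M g"
proof (rule Bochner_Integration.integrable_bound[OF assms(1,2)])
  show "AE x in M. norm (g x) \<le> norm (f x)"
  proof (rule AE_I2)
    fix x assume "x \<in> space M"
    from assms(3)[OF this] show "norm (g x) \<le> norm (f x)" by simp
  qed
qed

lemma tangent_powr:
  fixes p \<mu> x :: real assumes p: "1 \<le> p" and mu: "0 < \<mu>" and x: "0 \<le> x"
  shows "\<mu> powr p + p * \<mu> powr (p - 1) * (x - \<mu>) \<le> x powr p"
proof (cases "x = 0")
  case True
  have "\<mu> powr p = \<mu> powr (p - 1) * \<mu>" using mu by (simp add: powr_diff field_simps)
  then have "\<mu> powr p + p * \<mu> powr (p - 1) * (x - \<mu>) = (1 - p) * \<mu> powr p"
    using True by (simp add: algebra_simps)
  also have "\<dots> \<le> 0" using p by (simp add: mult_nonpos_nonneg)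
  finally show ?thesis using True by simp
next
  case False
  then have xp: "x > 0" using x by simp
  have "p * \<mu> powr (p - 1) * (x - \<mu>) \<le> x powr p - \<mu> powr p"
    by (rule convex_on_imp_above_tangent[OF powr_convex[OF p]])
       (use mu xp in \<open>auto intro!: derivative_eq_intros simp: interior_open\<close>)
  then show ?thesis by simp
qed

lemma (in prob_space) jensen_powr:
  fixes X :: "'a \<Rightarrow> real" and p :: real
  assumes p: "1 \<le> p" and X: "integrable M X" "integrable M (\<lambda>\<omega>. X \<omega> powr p)"
    and nn: "\<And>\<omega>. \<omega> \<in> space M \<Longrightarrow> 0 \<le> X \<omega>"
  shows "(\<integral>\<omega>. X \<omega> \<partial>M) powr p \<le> (\<integral>\<omega>. X \<omega> powr p \<partial>M)"
proof -
  define \<mu> where "\<mu> = (\<integral>\<omega>. X \<omega> \<partial>M)"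
  have mu0: "0 \<le> \<mu>" unfolding \<mu>_def using nn by simp
  show ?thesis
  proof (cases "\<mu> = 0")
    case True then show ?thesis by (simp add: \<mu>_def[symmetric])
  next
    case False
    then have mu: "\<mu> > 0" using mu0 by simp
    have "(\<integral>\<omega>. \<mu> powr p + p * \<mu> powr (p - 1) * (X \<omega> - \<mu>) \<partial>M) \<le> (\<integral>\<omega>. X \<omega> powr p \<partial>M)"
      by (rule integral_mono) (use X nn tangent_powr[OF p mu] in auto)
    also have "(\<integral>\<omega>. \<mu> powr p + p * \<mu> powr (p - 1) * (X \<omega> - \<mu>) \<partial>M) = \<mu> powr p"
      using X(1) by (simp add: \<mu>_def prob_space)
    finally show ?thesis by (simp add: \<mu>_def)
  qed
qed

lemma pow_le_one_plus:
  fixes x r s :: real assumes "0 \<le> r" "r \<le> s"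
  shows "\<bar>x\<bar> powr r \<le> 1 + \<bar>x\<bar> powr s"
proof (cases "\<bar>x\<bar> \<le> 1")
  case True
  then have "\<bar>x\<bar> powr r \<le> 1 powr r" using assms by (intro powr_mono2) auto
  moreover have "1 powr r = (1::real)" by simp
  ultimately show ?thesis using powr_ge_zero[of "\<bar>x\<bar>" s] by linarith
next
  case False
  then have "\<bar>x\<bar> powr r \<le> \<bar>x\<bar> powr s" using assms by (intro powr_mono) auto
  then show ?thesis by simp
qed

lemma pointwise_bound:
  fixes c z k hi a :: real assumes c: "\<bar>c\<bar> \<le> hi" and a: "0 < a" "a \<le> 1"
  shows "\<bar>(c * z + k)^2\<bar> powr (1 + a) \<le> 8 * hi powr (2 + 2 * a) * \<bar>z\<bar> powr (2 + 2 * a) + 8 * \<bar>k\<bar> powr (2 + 2 * a)"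
proof -
  have hi: "0 \<le> hi" using c by simp
  have "\<bar>(c * z + k)^2\<bar> powr (1 + a) = \<bar>c * z + k\<bar> powr (2 + 2 * a)"
  proof (cases "c * z + k = 0")
    case True then show ?thesis by simp
  next
    case False
    have h: "\<bar>(c * z + k)^2\<bar> = \<bar>c * z + k\<bar> powr 2"
      using False by (simp add: powr_realpow power2_abs)
    have "\<bar>(c * z + k)^2\<bar> powr (1 + a) = (\<bar>c * z + k\<bar> powr 2) powr (1 + a)"
      using h by (rule arg_cong[where f="\<lambda>t. t powr (1 + a)"])
    also have "\<dots> = \<bar>c * z + k\<bar> powr (2 * (1 + a))" by (rule powr_powr)
    also have "2 * (1 + a) = 2 + 2 * a" by simp
    finally show ?thesis .
  qed
  also have "\<dots> \<le> (hi * \<bar>z\<bar> + \<bar>k\<bar>) powr (2 + 2 * a)"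
  proof (rule powr_mono2)
    have "\<bar>c * z\<bar> \<le> hi * \<bar>z\<bar>" using c by (simp add: abs_mult mult_right_mono)
    then show "\<bar>c * z + k\<bar> \<le> hi * \<bar>z\<bar> + \<bar>k\<bar>" by linarith
  qed (use a in auto)
  also have "\<dots> \<le> 2 powr (2 + 2 * a - 1) * ((hi * \<bar>z\<bar>) powr (2 + 2 * a) + \<bar>k\<bar> powr (2 + 2 * a))"
    by (rule convex_pow2) (use a hi in auto)
  also have "\<dots> \<le> 8 * ((hi * \<bar>z\<bar>) powr (2 + 2 * a) + \<bar>k\<bar> powr (2 + 2 * a))"
  proof (rule mult_right_mono)
    have "2 powr (2 + 2 * a - 1) \<le> 2 powr (3::real)" using a by (intro powr_mono) auto
    then show "2 powr (2 + 2 * a - 1) \<le> 8" by simp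
  qed simp
  also have "\<dots> = 8 * hi powr (2 + 2 * a) * \<bar>z\<bar> powr (2 + 2 * a) + 8 * \<bar>k\<bar> powr (2 + 2 * a)"
    using hi by (simp add: powr_mult algebra_simps)
  finally show ?thesis .
qed




lemma (in prob_space) integral_le_const:
  fixes f :: "'a \<Rightarrow> real"
  assumes "\<And>\<omega>. \<omega> \<in> space M \<Longrightarrow> f \<omega> \<le> C" "0 \<le> C"
  shows "(\<integral>\<omega>. f \<omega> \<partial>M) \<le> C"
proof (cases "integrable M f")
  case True
  have "(\<integral>\<omega>. f \<omega> \<partial>M) \<le> (\<integral>\<omega>. C \<partial>M)" by (rule integral_mono) (use True assms in auto)
  then show ?thesis by (simp add: prob_space)
next
  case False then show ?thesis using assms by (simp add: not_integrable_integral_eq)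
qed

lemma abs_powr2: "\<bar>x::real\<bar> powr 2 = x^2"
  by (cases "x = 0") (simp_all add: powr_realpow)

context S3 begin

definition Ct :: real where
  "Ct = (SUP \<zeta>\<in>SigmaTil M Z K lo hi. (\<integral>\<omega>. \<bar>Zzeta Z K \<zeta> 1 \<omega>\<bar> powr (1 + \<alpha>) \<partial>M))"

definition Bd :: real where
  "Bd = 8 * hi powr (2 + 2 * \<alpha>) * (\<integral>\<omega>. \<bar>Z 1 \<omega>\<bar> powr (2 + 2 * \<alpha>) \<partial>M)
             + 8 * (\<integral>\<omega>. \<bar>K 1 \<omega>\<bar> powr (2 + 2 * \<alpha>) \<partial>M)"

lemma Zk_int: "1 \<le> k \<Longrightarrow> integrable M (\<lambda>\<omega>. \<bar>Z k \<omega>\<bar> powr (2 + 2 * \<alpha>))"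
  using Z_same(1)[of k "\<lambda>x. \<bar>x\<bar> powr (2 + 2 * \<alpha>)"] Zmom by simp

lemma Kk_int: "1 \<le> k \<Longrightarrow> integrable M (\<lambda>\<omega>. \<bar>K k \<omega>\<bar> powr (2 + 2 * \<alpha>))"
  using K_same(1)[of k "\<lambda>x. \<bar>x\<bar> powr (2 + 2 * \<alpha>)"] Kmom by simp

lemma Zk_intE: "1 \<le> k \<Longrightarrow> (\<integral>\<omega>. \<bar>Z k \<omega>\<bar> powr (2 + 2 * \<alpha>) \<partial>M) = (\<integral>\<omega>. \<bar>Z 1 \<omega>\<bar> powr (2 + 2 * \<alpha>) \<partial>M)"
  using Z_same(2)[of k "\<lambda>x. \<bar>x\<bar> powr (2 + 2 * \<alpha>)"] by simp

lemma Kk_intE: "1 \<le> k \<Longrightarrow> (\<integral>\<omega>. \<bar>K k \<omega>\<bar> powr (2 + 2 * \<alpha>) \<partial>M) = (\<integral>\<omega>. \<bar>K 1 \<omega>\<bar> powr (2 + 2 * \<alpha>) \<partial>M)"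
  using K_same(2)[of k "\<lambda>x. \<bar>x\<bar> powr (2 + 2 * \<alpha>)"] by simp

lemma hi_pos: "0 < hi" using zeta by simp

lemma Xk_int:
  assumes k: "1 \<le> k" and c: "c \<in> borel_measurable M" "\<And>\<omega>. \<omega> \<in> space M \<Longrightarrow> \<bar>c \<omega>\<bar> \<le> hi"
  shows "integrable M (\<lambda>\<omega>. \<bar>(c \<omega> * Z k \<omega> + K k \<omega>)^2\<bar> powr (1 + \<alpha>))"
    and "(\<integral>\<omega>. \<bar>(c \<omega> * Z k \<omega> + K k \<omega>)^2\<bar> powr (1 + \<alpha>) \<partial>M) \<le> Bd"
proof -
  let ?f = "\<lambda>\<omega>. 8 * hi powr (2 + 2 * \<alpha>) * \<bar>Z k \<omega>\<bar> powr (2 + 2 * \<alpha>) + 8 * \<bar>K k \<omega>\<bar> powr (2 + 2 * \<alpha>)"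
  have fi: "integrable M ?f" using Zk_int[OF k] Kk_int[OF k] by auto
  have pb: "\<bar>(c \<omega> * Z k \<omega> + K k \<omega>)^2\<bar> powr (1 + \<alpha>) \<le> ?f \<omega>" if "\<omega> \<in> space M" for \<omega>
    by (rule pointwise_bound[OF c(2)[OF that] alpha])
  have meas: "(\<lambda>\<omega>. \<bar>(c \<omega> * Z k \<omega> + K k \<omega>)^2\<bar> powr (1 + \<alpha>)) \<in> borel_measurable M"
    using c(1) Zrv[OF k] Krv[OF k] by measurable
  show ig: "integrable M (\<lambda>\<omega>. \<bar>(c \<omega> * Z k \<omega> + K k \<omega>)^2\<bar> powr (1 + \<alpha>))"
    by (rule integrable_dom[OF fi meas]) (use pb in auto)
  have "(\<integral>\<omega>. \<bar>(c \<omega> * Z k \<omega> + K k \<omega>)^2\<bar> powr (1 + \<alpha>) \<partial>M) \<le> (\<integral>\<omega>. ?f \<omega> \<partial>M)"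
    by (rule integral_mono[OF ig fi pb])
  also have "(\<integral>\<omega>. ?f \<omega> \<partial>M) = Bd"
    using Zk_int[OF k] Kk_int[OF k] Zk_intE[OF k] Kk_intE[OF k] by (simp add: Bd_def)
  finally show "(\<integral>\<omega>. \<bar>(c \<omega> * Z k \<omega> + K k \<omega>)^2\<bar> powr (1 + \<alpha>) \<partial>M) \<le> Bd" .
qed

lemma zeta_meas: "\<zeta> \<in> SigmaTil M Z K lo hi \<Longrightarrow> 1 \<le> i \<Longrightarrow> \<zeta> i \<in> borel_measurable M"
  using zeta_FM FM_meas_M by blast

lemma zeta_abs: "\<zeta> \<in> SigmaTil M Z K lo hi \<Longrightarrow> 1 \<le> i \<Longrightarrow> \<omega> \<in> space M \<Longrightarrow> \<bar>\<zeta> i \<omega>\<bar> \<le> hi"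
proof -
  assume a: "\<zeta> \<in> SigmaTil M Z K lo hi" "1 \<le> i" "\<omega> \<in> space M"
  from zeta_bd[OF a] zeta show ?thesis by auto
qed

lemma Sigma_ne: "SigmaTil M Z K lo hi \<noteq> {}"
  using const_Sigma[of lo] zeta by auto

lemma Ct_item:
  assumes "\<zeta> \<in> SigmaTil M Z K lo hi"
  shows "(\<integral>\<omega>. \<bar>Zzeta Z K \<zeta> 1 \<omega>\<bar> powr (1 + \<alpha>) \<partial>M) \<le> Bd"
  using Xk_int(2)[of 1 "\<zeta> 1", OF _ zeta_meas[OF assms] zeta_abs[OF assms]] by (simp add: Zzeta_def)

lemma Ct_bdd: "bdd_above ((\<lambda>\<zeta>. (\<integral>\<omega>. \<bar>Zzeta Z K \<zeta> 1 \<omega>\<bar> powr (1 + \<alpha>) \<partial>M)) ` SigmaTil M Z K lo hi)"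
  by (rule bdd_aboveI2[where M=Bd]) (rule Ct_item)

lemma Ct_le_Bd: "Ct \<le> Bd"
  unfolding Ct_def by (rule cSUP_least[OF Sigma_ne Ct_item])

lemma g_le_Ct:
  assumes c: "lo \<le> c" "c \<le> hi"
  shows "(\<integral>\<omega>. \<bar>(c * Z 1 \<omega> + K 1 \<omega>)^2\<bar> powr (1 + \<alpha>) \<partial>M) \<le> Ct"
  unfolding Ct_def
  by (rule cSUP_upper2[OF Ct_bdd const_Sigma[OF c]]) (simp add: Zzeta_def)

lemma Ct_nonneg: "0 \<le> Ct"
proof -
  have "0 \<le> (\<integral>\<omega>. \<bar>(lo * Z 1 \<omega> + K 1 \<omega>)^2\<bar> powr (1 + \<alpha>) \<partial>M)" by simp
  also have "\<dots> \<le> Ct" using g_le_Ct[of lo] zeta by simp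
  finally show ?thesis .
qed

lemma Z1_int2: "integrable M (\<lambda>\<omega>. (Z 1 \<omega>)^2)"
proof (rule integrable_dom)
  show "integrable M (\<lambda>\<omega>. 1 + \<bar>Z 1 \<omega>\<bar> powr (2 + 2 * \<alpha>))" using Zmom by simp
  show "(\<lambda>\<omega>. (Z 1 \<omega>)^2) \<in> borel_measurable M" using Zrv[of 1] by measurable
  fix \<omega> show "\<bar>(Z 1 \<omega>)^2\<bar> \<le> 1 + \<bar>Z 1 \<omega>\<bar> powr (2 + 2 * \<alpha>)"
    using pow_le_one_plus[of 2 "2 + 2 * \<alpha>" "Z 1 \<omega>"] alpha by (simp add: abs_powr2)
qed

lemma K1_int2: "integrable M (\<lambda>\<omega>. (K 1 \<omega>)^2)"
proof (rule integrable_dom)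
  show "integrable M (\<lambda>\<omega>. 1 + \<bar>K 1 \<omega>\<bar> powr (2 + 2 * \<alpha>))" using Kmom by simp
  show "(\<lambda>\<omega>. (K 1 \<omega>)^2) \<in> borel_measurable M" using Krv[of 1] by measurable
  fix \<omega> show "\<bar>(K 1 \<omega>)^2\<bar> \<le> 1 + \<bar>K 1 \<omega>\<bar> powr (2 + 2 * \<alpha>)"
    using pow_le_one_plus[of 2 "2 + 2 * \<alpha>" "K 1 \<omega>"] alpha by (simp add: abs_powr2)
qed

lemma Z1_int1: "integrable M (Z 1)"
proof (rule integrable_dom)
  show "integrable M (\<lambda>\<omega>. 1 + \<bar>Z 1 \<omega>\<bar> powr (2 + 2 * \<alpha>))" using Zmom by simp
  show "Z 1 \<in> borel_measurable M" using Zrv[of 1] by simp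
  fix \<omega> show "\<bar>Z 1 \<omega>\<bar> \<le> 1 + \<bar>Z 1 \<omega>\<bar> powr (2 + 2 * \<alpha>)"
    using pow_le_one_plus[of 1 "2 + 2 * \<alpha>" "Z 1 \<omega>"] alpha by simp
qed

lemma K1_int1: "integrable M (K 1)"
proof (rule integrable_dom)
  show "integrable M (\<lambda>\<omega>. 1 + \<bar>K 1 \<omega>\<bar> powr (2 + 2 * \<alpha>))" using Kmom by simp
  show "K 1 \<in> borel_measurable M" using Krv[of 1] by simp
  fix \<omega> show "\<bar>K 1 \<omega>\<bar> \<le> 1 + \<bar>K 1 \<omega>\<bar> powr (2 + 2 * \<alpha>)"
    using pow_le_one_plus[of 1 "2 + 2 * \<alpha>" "K 1 \<omega>"] alpha by simp
qed

lemma ZK1_int: "integrable M (\<lambda>\<omega>. Z 1 \<omega> * K 1 \<omega>)"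
  and ZK1_E: "(\<integral>\<omega>. Z 1 \<omega> * K 1 \<omega> \<partial>M) = 0"
  using indep_var_integrable[OF indep_ZK[of 1] Z1_int1 K1_int1]
    indep_var_lebesgue_integral[OF indep_ZK[of 1] Z1_int1 K1_int1] Kmean by auto

lemma X1_int: "integrable M (\<lambda>\<omega>. (c * Z 1 \<omega> + K 1 \<omega>)^2)"
proof -
  have "(\<lambda>\<omega>. (c * Z 1 \<omega> + K 1 \<omega>)^2) = (\<lambda>\<omega>. c^2 * (Z 1 \<omega>)^2 + 2 * c * (Z 1 \<omega> * K 1 \<omega>) + (K 1 \<omega>)^2)"
    by (rule ext) (simp add: power2_eq_square algebra_simps)
  then show ?thesis using Z1_int2 K1_int2 ZK1_int by simp
qed

lemma X1_E: "(\<integral>\<omega>. (c * Z 1 \<omega> + K 1 \<omega>)^2 \<partial>M) = c^2 * sigma2 + k2"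
proof -
  have "(\<lambda>\<omega>. (c * Z 1 \<omega> + K 1 \<omega>)^2) = (\<lambda>\<omega>. c^2 * (Z 1 \<omega>)^2 + 2 * c * (Z 1 \<omega> * K 1 \<omega>) + (K 1 \<omega>)^2)"
    by (rule ext) (simp add: power2_eq_square algebra_simps)
  then show ?thesis using Z1_int2 K1_int2 ZK1_int ZK1_E sigma2(1) k2(1) by simp
qed

lemma m_le_Ct:
  assumes c: "lo \<le> c" "c \<le> hi"
  shows "(c^2 * sigma2 + k2) powr (1 + \<alpha>) \<le> Ct"
proof -
  have "(c^2 * sigma2 + k2) powr (1 + \<alpha>) = (\<integral>\<omega>. (c * Z 1 \<omega> + K 1 \<omega>)^2 \<partial>M) powr (1 + \<alpha>)"
    by (simp only: X1_E)
  also have "(\<integral>\<omega>. (c * Z 1 \<omega> + K 1 \<omega>)^2 \<partial>M) powr (1 + \<alpha>) \<le> (\<integral>\<omega>. ((c * Z 1 \<omega> + K 1 \<omega>)^2) powr (1 + \<alpha>) \<partial>M)"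
  proof (rule jensen_powr)
    show "integrable M (\<lambda>\<omega>. ((c * Z 1 \<omega> + K 1 \<omega>)^2) powr (1 + \<alpha>))"
      using Xk_int(1)[of 1 "\<lambda>_. c"] c zeta by simp
  qed (use alpha X1_int in auto)
  also have "\<dots> \<le> Ct" using g_le_Ct[OF c] by simp
  finally show ?thesis .
qed

end



context S3 begin

definition mm :: "(nat \<Rightarrow> 'a \<Rightarrow> real) \<Rightarrow> nat \<Rightarrow> 'a \<Rightarrow> real" where
  "mm \<zeta> i \<omega> = (\<zeta> i \<omega>)^2 * sigma2 + k2"
definition DD :: "(nat \<Rightarrow> 'a \<Rightarrow> real) \<Rightarrow> nat \<Rightarrow> 'a \<Rightarrow> real" where
  "DD \<zeta> i \<omega> = Zzeta Z K \<zeta> i \<omega> - mm \<zeta> i \<omega>"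
definition SS :: "(nat \<Rightarrow> 'a \<Rightarrow> real) \<Rightarrow> nat \<Rightarrow> 'a \<Rightarrow> real" where
  "SS \<zeta> j \<omega> = (\<Sum>i=1..j. DD \<zeta> i \<omega>)"
definition psi :: "real \<Rightarrow> real" where
  "psi s = sgn s * \<bar>s\<bar> powr ((1 + \<alpha>) - 1)"

lemma psi_meas[measurable]: "psi \<in> borel_measurable borel"
  unfolding psi_def by measurable

lemma DD_FM:
  assumes z: "\<zeta> \<in> SigmaTil M Z K lo hi" and i: "1 \<le> i" "i \<le> j"
  shows "DD \<zeta> i \<in> borel_measurable (FM j)"
proof -
  have [measurable]: "\<zeta> i \<in> borel_measurable (FM j)"
    using FM_mono_meas[OF _ zeta_FM[OF z i(1)], of j] i by simp
  have [measurable]: "Z i \<in> borel_measurable (FM j)" "K i \<in> borel_measurable (FM j)"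
    using Z_FM[OF i] K_FM[OF i] by auto
  show ?thesis unfolding DD_def mm_def Zzeta_def by measurable
qed

lemma SS_FM:
  assumes z: "\<zeta> \<in> SigmaTil M Z K lo hi"
  shows "SS \<zeta> j \<in> borel_measurable (FM j)"
  unfolding SS_def by (rule borel_measurable_sum) (use DD_FM[OF z] in auto)

lemma DD_M: "\<zeta> \<in> SigmaTil M Z K lo hi \<Longrightarrow> 1 \<le> i \<Longrightarrow> DD \<zeta> i \<in> borel_measurable M"
  using DD_FM[of \<zeta> i i] FM_meas_M by blast

lemma SS_M: "\<zeta> \<in> SigmaTil M Z K lo hi \<Longrightarrow> SS \<zeta> j \<in> borel_measurable M"
  using SS_FM FM_meas_M by blast

lemma V_FM:
  assumes z: "\<zeta> \<in> SigmaTil M Z K lo hi" and k: "1 \<le> k"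
  shows "(\<lambda>\<omega>. (\<zeta> k \<omega>, SS \<zeta> (k - 1) \<omega>)) \<in> borel_measurable (FM (k - 1))"
  by (rule borel_measurable_Pair[OF zeta_FM[OF z k] SS_FM[OF z]])

lemma DD_int:
  assumes z: "\<zeta> \<in> SigmaTil M Z K lo hi" and k: "1 \<le> k"
  shows "integrable M (\<lambda>\<omega>. \<bar>DD \<zeta> k \<omega>\<bar> powr (1 + \<alpha>))"
    and "(\<integral>\<omega>. \<bar>DD \<zeta> k \<omega>\<bar> powr (1 + \<alpha>) \<partial>M) \<le> 2 * Ct"
proof -
  let ?X = "\<lambda>\<omega>. \<bar>(\<zeta> k \<omega> * Z k \<omega> + K k \<omega>)^2\<bar> powr (1 + \<alpha>)"
  let ?m = "\<lambda>\<omega>. (mm \<zeta> k \<omega>) powr (1 + \<alpha>)"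
  have zm[measurable]: "\<zeta> k \<in> borel_measurable M" by (rule zeta_meas[OF z k])
  have [measurable]: "Z k \<in> borel_measurable M" "K k \<in> borel_measurable M" using Zrv Krv k by auto
  have Xi: "integrable M ?X" by (rule Xk_int(1)[OF k zm zeta_abs[OF z k]])
  have mb: "?m \<omega> \<le> Ct" if "\<omega> \<in> space M" for \<omega>
    using m_le_Ct[of "\<zeta> k \<omega>"] zeta_bd[OF z k that] by (simp add: mm_def)
  have mn: "0 \<le> mm \<zeta> k \<omega>" for \<omega> using sigma2 k2 by (simp add: mm_def)
  have mi: "integrable M ?m"
  proof (rule integrable_dom)
    show "integrable M (\<lambda>_. Ct)" by simp
    show "?m \<in> borel_measurable M" unfolding mm_def by measurable
  qed (use mb in auto)
  have pb: "\<bar>DD \<zeta> k \<omega>\<bar> powr (1 + \<alpha>) \<le> ?X \<omega> + ?m \<omega>" for \<omega>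
    using diff_pow_bound[of "1 + \<alpha>" "(\<zeta> k \<omega> * Z k \<omega> + K k \<omega>)^2" "mm \<zeta> k \<omega>"] alpha mn
    by (simp add: DD_def Zzeta_def)
  show Di: "integrable M (\<lambda>\<omega>. \<bar>DD \<zeta> k \<omega>\<bar> powr (1 + \<alpha>))"
  proof (rule integrable_dom)
    show "integrable M (\<lambda>\<omega>. ?X \<omega> + ?m \<omega>)" using Xi mi by simp
    show "(\<lambda>\<omega>. \<bar>DD \<zeta> k \<omega>\<bar> powr (1 + \<alpha>)) \<in> borel_measurable M" using DD_M[OF z k] by measurable
  qed (use pb in auto)
  define F :: "(real \<times> real) \<times> (real \<times> real) \<Rightarrow> real" where
    "F x = \<bar>(fst (fst x) * fst (snd x) + snd (snd x))^2\<bar> powr (1 + \<alpha>)" for x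
  have Fm: "F \<in> borel_measurable borel" unfolding F_def
    by (intro borel_measurable_continuous_onI continuous_on_powr' continuous_intros) (use alpha in auto)
  let ?V = "\<lambda>\<omega>. (\<zeta> k \<omega>, SS \<zeta> (k - 1) \<omega>)" and ?Y = "\<lambda>\<omega>. (Z k \<omega>, K k \<omega>)"
  have ind: "indep_var borel ?V borel ?Y" by (rule indep_VY[OF k V_FM[OF z k]])
  have "(\<integral>\<omega>. ?X \<omega> \<partial>M) = (\<integral>\<omega>. F (?V \<omega>, ?Y \<omega>) \<partial>M)" by (simp add: F_def)
  also have "\<dots> = (\<integral>\<omega>. (\<integral>y. F (?V \<omega>, y) \<partial>distr M borel ?Y) \<partial>M)"
    by (rule fubini_indep[OF ind Fm]) (use Xi in \<open>simp add: F_def\<close>)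
  also have "\<dots> \<le> Ct"
  proof (rule integral_le_const[OF _ Ct_nonneg])
    fix \<omega> assume \<omega>: "\<omega> \<in> space M"
    have Y1: "(\<lambda>\<omega>. (Z 1 \<omega>, K 1 \<omega>)) \<in> borel_measurable M" using Zrv Krv by auto
    have Fm': "(\<lambda>y. F (?V \<omega>, y)) \<in> borel_measurable borel" unfolding F_def
      by (intro borel_measurable_continuous_onI continuous_on_powr' continuous_intros) (use alpha in auto)
    have "(\<integral>y. F (?V \<omega>, y) \<partial>distr M borel ?Y) = (\<integral>y. F (?V \<omega>, y) \<partial>distr M borel (\<lambda>\<omega>. (Z 1 \<omega>, K 1 \<omega>)))"
      by (simp add: pair_distr[OF k])
    also have "\<dots> = (\<integral>\<omega>'. F (?V \<omega>, (Z 1 \<omega>', K 1 \<omega>')) \<partial>M)"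
      by (rule integral_distr[OF Y1 Fm'])
    also have "\<dots> = (\<integral>\<omega>'. \<bar>(\<zeta> k \<omega> * Z 1 \<omega>' + K 1 \<omega>')^2\<bar> powr (1 + \<alpha>) \<partial>M)" by (simp add: F_def)
    also have "\<dots> \<le> Ct" using g_le_Ct zeta_bd[OF z k \<omega>] by blast
    finally show "(\<integral>y. F (?V \<omega>, y) \<partial>distr M borel ?Y) \<le> Ct" .
  qed
  finally have EX: "(\<integral>\<omega>. ?X \<omega> \<partial>M) \<le> Ct" .
  have Em: "(\<integral>\<omega>. ?m \<omega> \<partial>M) \<le> Ct" by (rule integral_le_const[OF mb Ct_nonneg])
  have "(\<integral>\<omega>. \<bar>DD \<zeta> k \<omega>\<bar> powr (1 + \<alpha>) \<partial>M) \<le> (\<integral>\<omega>. ?X \<omega> + ?m \<omega> \<partial>M)"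
    by (rule integral_mono[OF Di]) (use Xi mi pb in auto)
  also have "\<dots> = (\<integral>\<omega>. ?X \<omega> \<partial>M) + (\<integral>\<omega>. ?m \<omega> \<partial>M)" using Xi mi by simp
  finally show "(\<integral>\<omega>. \<bar>DD \<zeta> k \<omega>\<bar> powr (1 + \<alpha>) \<partial>M) \<le> 2 * Ct" using EX Em by linarith
qed

end



context S3 begin

lemma cross:
  assumes z: "\<zeta> \<in> SigmaTil M Z K lo hi" and k: "1 \<le> k"
    and Sint: "integrable M (\<lambda>\<omega>. \<bar>SS \<zeta> (k - 1) \<omega>\<bar> powr (1 + \<alpha>))"
  shows "integrable M (\<lambda>\<omega>. psi (SS \<zeta> (k - 1) \<omega>) * DD \<zeta> k \<omega>)"
    and "(\<integral>\<omega>. psi (SS \<zeta> (k - 1) \<omega>) * DD \<zeta> k \<omega> \<partial>M) = 0"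
proof -
  have [measurable]: "SS \<zeta> (k - 1) \<in> borel_measurable M" by (rule SS_M[OF z])
  have [measurable]: "DD \<zeta> k \<in> borel_measurable M" by (rule DD_M[OF z k])
  show I: "integrable M (\<lambda>\<omega>. psi (SS \<zeta> (k - 1) \<omega>) * DD \<zeta> k \<omega>)"
  proof (rule integrable_dom)
    show "integrable M (\<lambda>\<omega>. \<bar>SS \<zeta> (k - 1) \<omega>\<bar> powr (1 + \<alpha>) + \<bar>DD \<zeta> k \<omega>\<bar> powr (1 + \<alpha>))"
      using Sint DD_int(1)[OF z k] by simp
    show "(\<lambda>\<omega>. psi (SS \<zeta> (k - 1) \<omega>) * DD \<zeta> k \<omega>) \<in> borel_measurable M" by measurable
    fix \<omega>
    show "\<bar>psi (SS \<zeta> (k - 1) \<omega>) * DD \<zeta> k \<omega>\<bar> \<le> \<bar>SS \<zeta> (k - 1) \<omega>\<bar> powr (1 + \<alpha>) + \<bar>DD \<zeta> k \<omega>\<bar> powr (1 + \<alpha>)"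
      using psi_bound[of "1 + \<alpha>" "SS \<zeta> (k - 1) \<omega>" "DD \<zeta> k \<omega>"] alpha by (simp add: psi_def)
  qed
  define F :: "(real \<times> real) \<times> (real \<times> real) \<Rightarrow> real" where
    "F x = psi (snd (fst x)) * ((fst (fst x) * fst (snd x) + snd (snd x))^2 - ((fst (fst x))^2 * sigma2 + k2))" for x
  have Fm: "F \<in> borel_measurable borel"
  proof -
    have "(\<lambda>x::(real \<times> real) \<times> (real \<times> real). psi (snd (fst x))) \<in> borel_measurable borel"
      by (rule measurable_compose[OF _ psi_meas]) (intro borel_measurable_continuous_onI continuous_intros)
    moreover have "(\<lambda>x::(real \<times> real) \<times> (real \<times> real). (fst (fst x) * fst (snd x) + snd (snd x))^2 - ((fst (fst x))^2 * sigma2 + k2)) \<in> borel_measurable borel"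
      by (intro borel_measurable_continuous_onI continuous_intros)
    ultimately show ?thesis unfolding F_def by (rule borel_measurable_times)
  qed
  let ?V = "\<lambda>\<omega>. (\<zeta> k \<omega>, SS \<zeta> (k - 1) \<omega>)" and ?Y = "\<lambda>\<omega>. (Z k \<omega>, K k \<omega>)"
  have ind: "indep_var borel ?V borel ?Y" by (rule indep_VY[OF k V_FM[OF z k]])
  have eqF: "F (?V \<omega>, ?Y \<omega>) = psi (SS \<zeta> (k - 1) \<omega>) * DD \<zeta> k \<omega>" for \<omega>
    by (simp add: F_def DD_def Zzeta_def mm_def)
  have "(\<integral>\<omega>. psi (SS \<zeta> (k - 1) \<omega>) * DD \<zeta> k \<omega> \<partial>M) = (\<integral>\<omega>. F (?V \<omega>, ?Y \<omega>) \<partial>M)"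
    unfolding eqF ..
  also have "\<dots> = (\<integral>\<omega>. (\<integral>y. F (?V \<omega>, y) \<partial>distr M borel ?Y) \<partial>M)"
    by (rule fubini_indep[OF ind Fm]) (unfold eqF, rule I)
  also have "\<dots> = (\<integral>\<omega>. 0 \<partial>M)"
  proof (rule Bochner_Integration.integral_cong[OF refl])
    fix \<omega> assume \<omega>: "\<omega> \<in> space M"
    define c where "c = \<zeta> k \<omega>"
    define s where "s = SS \<zeta> (k - 1) \<omega>"
    have Y1: "(\<lambda>\<omega>. (Z 1 \<omega>, K 1 \<omega>)) \<in> borel_measurable M" using Zrv Krv by auto
    have Fe: "F (?V \<omega>, y) = psi s * ((c * fst y + snd y)^2 - (c^2 * sigma2 + k2))" for y
      by (simp add: F_def c_def s_def)
    have Fm': "(\<lambda>y. psi s * ((c * fst y + snd y)^2 - (c^2 * sigma2 + k2))) \<in> borel_measurable borel"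
      by (intro borel_measurable_continuous_onI continuous_intros)
    have "(\<integral>y. F (?V \<omega>, y) \<partial>distr M borel ?Y) = (\<integral>y. psi s * ((c * fst y + snd y)^2 - (c^2 * sigma2 + k2)) \<partial>distr M borel (\<lambda>\<omega>. (Z 1 \<omega>, K 1 \<omega>)))"
      by (simp only: pair_distr[OF k] Fe)
    also have "\<dots> = (\<integral>\<omega>'. psi s * ((c * Z 1 \<omega>' + K 1 \<omega>')^2 - (c^2 * sigma2 + k2)) \<partial>M)"
      using integral_distr[OF Y1 Fm'] by simp
    also have "\<dots> = psi s * ((\<integral>\<omega>'. (c * Z 1 \<omega>' + K 1 \<omega>')^2 \<partial>M) - (c^2 * sigma2 + k2))"
      using X1_int[of c] by (simp add: prob_space)
    also have "\<dots> = 0" using X1_E[of c] by simp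
    finally show "(\<integral>y. F (?V \<omega>, y) \<partial>distr M borel ?Y) = 0" .
  qed
  finally show "(\<integral>\<omega>. psi (SS \<zeta> (k - 1) \<omega>) * DD \<zeta> k \<omega> \<partial>M) = 0" by simp
qed

lemma SS_bound:
  assumes z: "\<zeta> \<in> SigmaTil M Z K lo hi"
  shows "integrable M (\<lambda>\<omega>. \<bar>SS \<zeta> j \<omega>\<bar> powr (1 + \<alpha>)) \<and> (\<integral>\<omega>. \<bar>SS \<zeta> j \<omega>\<bar> powr (1 + \<alpha>) \<partial>M) \<le> 4 * real j * Ct"
proof (induction j)
  case 0
  then show ?case by (simp add: SS_def)
next
  case (Suc j)
  let ?p = "1 + \<alpha>"
  let ?S = "SS \<zeta> j" and ?D = "DD \<zeta> (Suc j)"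
  have k: "1 \<le> Suc j" by simp
  have Sint: "integrable M (\<lambda>\<omega>. \<bar>?S \<omega>\<bar> powr ?p)" and SE: "(\<integral>\<omega>. \<bar>?S \<omega>\<bar> powr ?p \<partial>M) \<le> 4 * real j * Ct"
    using Suc.IH by auto
  have cI: "integrable M (\<lambda>\<omega>. psi (?S \<omega>) * ?D \<omega>)" and cE: "(\<integral>\<omega>. psi (?S \<omega>) * ?D \<omega> \<partial>M) = 0"
    using cross[OF z k] Sint by auto
  have Dint: "integrable M (\<lambda>\<omega>. \<bar>?D \<omega>\<bar> powr ?p)" and DE: "(\<integral>\<omega>. \<bar>?D \<omega>\<bar> powr ?p \<partial>M) \<le> 2 * Ct"
    using DD_int[OF z k] by auto
  have SSuc: "SS \<zeta> (Suc j) \<omega> = ?S \<omega> + ?D \<omega>" for \<omega> by (simp add: SS_def)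
  have kb: "\<bar>?S \<omega> + ?D \<omega>\<bar> powr ?p \<le> \<bar>?S \<omega>\<bar> powr ?p + ?p * (psi (?S \<omega>) * ?D \<omega>) + 2 * \<bar>?D \<omega>\<bar> powr ?p" for \<omega>
    using key2[of ?p "?S \<omega>" "?D \<omega>"] alpha by (simp add: psi_def algebra_simps)
  have pb: "\<bar>psi (?S \<omega>) * ?D \<omega>\<bar> \<le> \<bar>?S \<omega>\<bar> powr ?p + \<bar>?D \<omega>\<bar> powr ?p" for \<omega>
    using psi_bound[of ?p "?S \<omega>" "?D \<omega>"] alpha by (simp add: psi_def)
  have RI: "integrable M (\<lambda>\<omega>. \<bar>?S \<omega>\<bar> powr ?p + ?p * (psi (?S \<omega>) * ?D \<omega>) + 2 * \<bar>?D \<omega>\<bar> powr ?p)"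
    using Sint cI Dint by simp
  have [measurable]: "?S \<in> borel_measurable M" "?D \<in> borel_measurable M" using SS_M[OF z] DD_M[OF z k] by auto
  have I: "integrable M (\<lambda>\<omega>. \<bar>SS \<zeta> (Suc j) \<omega>\<bar> powr ?p)"
    unfolding SSuc
  proof (rule integrable_dom[OF RI])
    show "(\<lambda>\<omega>. \<bar>?S \<omega> + ?D \<omega>\<bar> powr ?p) \<in> borel_measurable M" by measurable
    fix \<omega>
    show "\<bar>\<bar>?S \<omega> + ?D \<omega>\<bar> powr ?p\<bar> \<le> \<bar>?S \<omega>\<bar> powr ?p + ?p * (psi (?S \<omega>) * ?D \<omega>) + 2 * \<bar>?D \<omega>\<bar> powr ?p"
      using kb[of \<omega>] by simp
  qed
  have "(\<integral>\<omega>. \<bar>SS \<zeta> (Suc j) \<omega>\<bar> powr ?p \<partial>M) \<le> (\<integral>\<omega>. \<bar>?S \<omega>\<bar> powr ?p + ?p * (psi (?S \<omega>) * ?D \<omega>) + 2 * \<bar>?D \<omega>\<bar> powr ?p \<partial>M)"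
    by (rule integral_mono[OF I RI]) (simp add: SSuc kb)
  also have "\<dots> = (\<integral>\<omega>. \<bar>?S \<omega>\<bar> powr ?p \<partial>M) + ?p * (\<integral>\<omega>. psi (?S \<omega>) * ?D \<omega> \<partial>M) + 2 * (\<integral>\<omega>. \<bar>?D \<omega>\<bar> powr ?p \<partial>M)"
    using Sint cI Dint by simp
  also have "\<dots> \<le> 4 * real (Suc j) * Ct"
  proof -
    have "4 * real (Suc j) * Ct = 4 * real j * Ct + 4 * Ct" by (simp add: algebra_simps)
    then show ?thesis using SE cE DE by simp
  qed
  finally show ?case using I by simp
qed

end



context S3 begin

definition Mn :: "(nat \<Rightarrow> 'a \<Rightarrow> real) \<Rightarrow> nat \<Rightarrow> 'a \<Rightarrow> real" where
  "Mn \<zeta> n \<omega> = (\<Sum>i=1..n. mm \<zeta> i \<omega>) / real n"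

lemma W_eq: "Wnn Z K \<zeta> n \<omega> - Mn \<zeta> n \<omega> = SS \<zeta> n \<omega> / real n"
  unfolding Wnn_def Mn_def SS_def DD_def by (simp add: sum_subtractf diff_divide_distrib)

lemma powr_alg:
  fixes n C p a :: real assumes n: "1 \<le> n" and C: "0 \<le> C" and p: "p = 1 + a" and a: "0 < a"
  shows "(4 * n * C) powr (1 / p) / n = (4 * C / n powr a) powr (1 / p)"
proof -
  have np: "n > 0" using n by simp
  have "(4 * C / n powr a) powr (1 / p) = (4 * C) powr (1 / p) / (n powr a) powr (1 / p)"
    using C np by (simp add: powr_divide)
  also have "(n powr a) powr (1 / p) = n powr (a / p)" by (simp add: powr_powr)
  finally have r: "(4 * C / n powr a) powr (1 / p) = (4 * C) powr (1 / p) / n powr (a / p)" .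
  have l: "(4 * n * C) powr (1 / p) = (4 * C) powr (1 / p) * n powr (1 / p)"
    using C np by (simp add: powr_mult[symmetric] algebra_simps)
  have nn: "n powr (1 / p) * n powr (a / p) = n"
  proof -
    have "n powr (1 / p) * n powr (a / p) = n powr (1 / p + a / p)" by (simp add: powr_add)
    also have "1 / p + a / p = 1" using p a by (simp add: add_divide_distrib[symmetric])
    finally show ?thesis using np by simp
  qed
  have pos: "n powr (a / p) > 0" using np by simp
  show ?thesis unfolding r l using nn pos np
    by (simp add: field_simps)
qed

lemma rate:
  assumes z: "\<zeta> \<in> SigmaTil M Z K lo hi" and n: "1 \<le> n"
  shows "integrable M (\<lambda>\<omega>. SS \<zeta> n \<omega>)"
    and "integrable M (\<lambda>\<omega>. \<bar>SS \<zeta> n \<omega>\<bar>)"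
    and "(\<integral>\<omega>. \<bar>Wnn Z K \<zeta> n \<omega> - Mn \<zeta> n \<omega>\<bar> \<partial>M) \<le> (4 * Ct / real n powr \<alpha>) powr (1 / (1 + \<alpha>))"
proof -
  let ?p = "1 + \<alpha>"
  have Sp: "integrable M (\<lambda>\<omega>. \<bar>SS \<zeta> n \<omega>\<bar> powr ?p)" and SE: "(\<integral>\<omega>. \<bar>SS \<zeta> n \<omega>\<bar> powr ?p \<partial>M) \<le> 4 * real n * Ct"
    using SS_bound[OF z, of n] by auto
  have [measurable]: "SS \<zeta> n \<in> borel_measurable M" by (rule SS_M[OF z])
  show Sa: "integrable M (\<lambda>\<omega>. \<bar>SS \<zeta> n \<omega>\<bar>)"
  proof (rule integrable_dom)
    show "integrable M (\<lambda>\<omega>. 1 + \<bar>SS \<zeta> n \<omega>\<bar> powr ?p)" using Sp by simp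
    fix \<omega> show "\<bar>\<bar>SS \<zeta> n \<omega>\<bar>\<bar> \<le> 1 + \<bar>SS \<zeta> n \<omega>\<bar> powr ?p"
      using pow_le_one_plus[of 1 ?p "SS \<zeta> n \<omega>"] alpha by simp
  qed measurable
  show "integrable M (\<lambda>\<omega>. SS \<zeta> n \<omega>)"
    by (rule integrable_dom[OF Sa]) auto
  have "(\<integral>\<omega>. \<bar>SS \<zeta> n \<omega>\<bar> \<partial>M) powr ?p \<le> (\<integral>\<omega>. \<bar>SS \<zeta> n \<omega>\<bar> powr ?p \<partial>M)"
    by (rule jensen_powr) (use alpha Sa Sp in auto)
  also have "\<dots> \<le> 4 * real n * Ct" by (rule SE)
  finally have J: "(\<integral>\<omega>. \<bar>SS \<zeta> n \<omega>\<bar> \<partial>M) powr ?p \<le> 4 * real n * Ct" .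
  have E0: "0 \<le> (\<integral>\<omega>. \<bar>SS \<zeta> n \<omega>\<bar> \<partial>M)" by simp
  have "(\<integral>\<omega>. \<bar>SS \<zeta> n \<omega>\<bar> \<partial>M) = ((\<integral>\<omega>. \<bar>SS \<zeta> n \<omega>\<bar> \<partial>M) powr ?p) powr (1 / ?p)"
    using E0 alpha by (simp add: powr_powr)
  also have "\<dots> \<le> (4 * real n * Ct) powr (1 / ?p)"
    by (rule powr_mono2) (use J alpha in auto)
  finally have E1: "(\<integral>\<omega>. \<bar>SS \<zeta> n \<omega>\<bar> \<partial>M) \<le> (4 * real n * Ct) powr (1 / ?p)" .
  have "(\<integral>\<omega>. \<bar>Wnn Z K \<zeta> n \<omega> - Mn \<zeta> n \<omega>\<bar> \<partial>M) = (\<integral>\<omega>. \<bar>SS \<zeta> n \<omega>\<bar> \<partial>M) / real n"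
    unfolding W_eq using n by simp
  also have "\<dots> \<le> (4 * real n * Ct) powr (1 / ?p) / real n"
    using E1 n by (simp add: divide_right_mono)
  also have "\<dots> = (4 * Ct / real n powr \<alpha>) powr (1 / ?p)"
    by (rule powr_alg) (use n Ct_nonneg alpha in auto)
  finally show "(\<integral>\<omega>. \<bar>Wnn Z K \<zeta> n \<omega> - Mn \<zeta> n \<omega>\<bar> \<partial>M) \<le> (4 * Ct / real n powr \<alpha>) powr (1 / (1 + \<alpha>))" .
qed

lemma mm_range:
  assumes z: "\<zeta> \<in> SigmaTil M Z K lo hi" and i: "1 \<le> i" and \<omega>: "\<omega> \<in> space M"
  shows "sigma2 * lo^2 + k2 \<le> mm \<zeta> i \<omega> \<and> mm \<zeta> i \<omega> \<le> sigma2 * hi^2 + k2"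
proof -
  have b: "lo \<le> \<zeta> i \<omega>" "\<zeta> i \<omega> \<le> hi" using zeta_bd[OF z i \<omega>] by auto
  have "lo^2 \<le> (\<zeta> i \<omega>)^2" using b zeta by (intro power_mono) auto
  moreover have "(\<zeta> i \<omega>)^2 \<le> hi^2" using b zeta by (intro power_mono) auto
  ultimately show ?thesis using sigma2 by (auto simp: mm_def mult_left_mono algebra_simps)
qed

lemma Mn_range:
  assumes z: "\<zeta> \<in> SigmaTil M Z K lo hi" and n: "1 \<le> n" and \<omega>: "\<omega> \<in> space M"
  shows "sigma2 * lo^2 + k2 \<le> Mn \<zeta> n \<omega> \<and> Mn \<zeta> n \<omega> \<le> sigma2 * hi^2 + k2"
proof -
  have "(\<Sum>i=1..n. mm \<zeta> i \<omega>) \<le> real (card {1..n}) * (sigma2 * hi^2 + k2)"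
    by (rule sum_bounded_above) (use mm_range[OF z _ \<omega>] in auto)
  moreover have "real (card {1..n}) * (sigma2 * lo^2 + k2) \<le> (\<Sum>i=1..n. mm \<zeta> i \<omega>)"
    by (rule sum_bounded_below) (use mm_range[OF z _ \<omega>] in auto)
  ultimately show ?thesis using n unfolding Mn_def by (auto simp: field_simps)
qed

lemma Mn_meas: "\<zeta> \<in> SigmaTil M Z K lo hi \<Longrightarrow> Mn \<zeta> n \<in> borel_measurable M"
proof -
  assume z: "\<zeta> \<in> SigmaTil M Z K lo hi"
  have "(\<lambda>\<omega>. \<Sum>i=1..n. mm \<zeta> i \<omega>) \<in> borel_measurable M"
  proof (rule borel_measurable_sum)
    fix i assume "i \<in> {1..n}"
    then have [measurable]: "\<zeta> i \<in> borel_measurable M" using zeta_meas[OF z] by auto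
    show "mm \<zeta> i \<in> borel_measurable M" unfolding mm_def by measurable
  qed
  then show ?thesis unfolding Mn_def by measurable
qed

lemma W_int:
  assumes z: "\<zeta> \<in> SigmaTil M Z K lo hi" and n: "1 \<le> n"
  shows "integrable M (Wnn Z K \<zeta> n)" and "integrable M (\<lambda>\<omega>. \<bar>Wnn Z K \<zeta> n \<omega> - Mn \<zeta> n \<omega>\<bar>)"
proof -
  have [measurable]: "Mn \<zeta> n \<in> borel_measurable M" by (rule Mn_meas[OF z])
  have Mi: "integrable M (Mn \<zeta> n)"
  proof (rule integrable_dom)
    show "integrable M (\<lambda>_. sigma2 * hi^2 + k2)" by simp
    fix \<omega> assume "\<omega> \<in> space M"
    then have r: "sigma2 * lo^2 + k2 \<le> Mn \<zeta> n \<omega>" "Mn \<zeta> n \<omega> \<le> sigma2 * hi^2 + k2"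
      using Mn_range[OF z n] by auto
    have "0 \<le> sigma2 * lo^2 + k2" using sigma2 k2 by simp
    then show "\<bar>Mn \<zeta> n \<omega>\<bar> \<le> sigma2 * hi^2 + k2" using r by (simp add: abs_le_iff)
  qed measurable
  have e: "Wnn Z K \<zeta> n = (\<lambda>\<omega>. SS \<zeta> n \<omega> / real n + Mn \<zeta> n \<omega>)"
    using W_eq by (auto simp: fun_eq_iff algebra_simps)
  show "integrable M (Wnn Z K \<zeta> n)" unfolding e using rate(1)[OF z n] Mi by simp
  show "integrable M (\<lambda>\<omega>. \<bar>Wnn Z K \<zeta> n \<omega> - Mn \<zeta> n \<omega>\<bar>)" unfolding W_eq
    using rate(2)[OF z n] by simp
qed

end



theorem theorem3p1:
  fixes M :: "'a measure" and Z K :: "nat \<Rightarrow> 'a \<Rightarrow> real"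
    and sigma2 k2 \<alpha> lo hi L :: real and \<phi> :: "real \<Rightarrow> real" and n :: nat
  assumes "prob_space M"
    and Zrv: "\<And>i. i \<ge> 1 \<Longrightarrow> Z i \<in> borel_measurable M"
    and Krv: "\<And>i. i \<ge> 1 \<Longrightarrow> K i \<in> borel_measurable M"
    and indep: "prob_space.indep_vars M (\<lambda>_. borel)
                  (\<lambda>x. case x of Inl i \<Rightarrow> Z i | Inr i \<Rightarrow> K i)
                  (Inl ` {1..} \<union> Inr ` {1..})"
    and Zid: "\<And>i. i \<ge> 1 \<Longrightarrow> distr M borel (Z i) = distr M borel (Z 1)"
    and Kid: "\<And>i. i \<ge> 1 \<Longrightarrow> distr M borel (K i) = distr M borel (K 1)"
    and alpha: "0 < \<alpha>" "\<alpha> \<le> 1"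
    and Zmom: "integrable M (\<lambda>\<omega>. \<bar>Z 1 \<omega>\<bar> powr (2 + 2 * \<alpha>))"
    and Kmom: "integrable M (\<lambda>\<omega>. \<bar>K 1 \<omega>\<bar> powr (2 + 2 * \<alpha>))"
    and sigma2: "(\<integral>\<omega>. \<bar>Z 1 \<omega>\<bar>^2 \<partial>M) = sigma2" "sigma2 > 0"
    and Kmean: "(\<integral>\<omega>. K 1 \<omega> \<partial>M) = 0"
    and k2: "(\<integral>\<omega>. \<bar>K 1 \<omega>\<bar>^2 \<partial>M) = k2" "k2 > 0"
    and zeta: "0 < lo" "lo < hi"
    and lip: "L-lipschitz_on UNIV \<phi>"
    and n: "n \<ge> 1"
  shows "\<bar>(SUP \<zeta>\<in>SigmaTil M Z K lo hi. (\<integral>\<omega>. \<phi> (Wnn Z K \<zeta> n \<omega>) \<partial>M))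
           - (SUP r\<in>{sigma2 * lo^2 + k2 .. sigma2 * hi^2 + k2}. \<phi> r)\<bar>
         \<le> L * (4 * (SUP \<zeta>\<in>SigmaTil M Z K lo hi. (\<integral>\<omega>. \<bar>Zzeta Z K \<zeta> 1 \<omega>\<bar> powr (1 + \<alpha>) \<partial>M))
                 / real n powr \<alpha>) powr (1 / (1 + \<alpha>))
       \<and> bdd_above ((\<lambda>\<zeta>. (\<integral>\<omega>. \<bar>Zzeta Z K \<zeta> 1 \<omega>\<bar> powr (1 + \<alpha>) \<partial>M)) ` SigmaTil M Z K lo hi)
       \<and> (SUP \<zeta>\<in>SigmaTil M Z K lo hi. (\<integral>\<omega>. \<bar>Zzeta Z K \<zeta> 1 \<omega>\<bar> powr (1 + \<alpha>) \<partial>M))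
           \<le> 8 * hi powr (2 + 2 * \<alpha>) * (\<integral>\<omega>. \<bar>Z 1 \<omega>\<bar> powr (2 + 2 * \<alpha>) \<partial>M)
             + 8 * (\<integral>\<omega>. \<bar>K 1 \<omega>\<bar> powr (2 + 2 * \<alpha>) \<partial>M)"
proof -
  interpret S: S3 M Z K sigma2 k2 \<alpha> lo hi
    by (intro S3.intro S3_axioms.intro) (fact assms)+
  have CtE: "(SUP \<zeta>\<in>SigmaTil M Z K lo hi. (\<integral>\<omega>. \<bar>Zzeta Z K \<zeta> 1 \<omega>\<bar> powr (1 + \<alpha>) \<partial>M)) = S.Ct"
    by (simp add: S.Ct_def)
  define a where "a = sigma2 * lo^2 + k2"
  define b where "b = sigma2 * hi^2 + k2"
  define R where "R = (4 * S.Ct / real n powr \<alpha>) powr (1 / (1 + \<alpha>))"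
  define \<Phi> where "\<Phi> = (SUP r\<in>{a..b}. \<phi> r)"
  define E where "E \<zeta> = (\<integral>\<omega>. \<phi> (Wnn Z K \<zeta> n \<omega>) \<partial>M)" for \<zeta>
  have L0: "0 \<le> L" using lipschitz_on_nonneg[OF lip] .
  have lipd: "\<bar>\<phi> x - \<phi> y\<bar> \<le> L * \<bar>x - y\<bar>" for x y
    using lipschitz_onD[OF lip, of x y] by (simp add: dist_real_def)
  have ab: "a \<le> b" unfolding a_def b_def using zeta sigma2
    by (simp add: mult_left_mono power_mono)
  have phic: "continuous_on UNIV \<phi>"
    using lipschitz_on_uniformly_continuous[OF lip] uniformly_continuous_imp_continuous by blast
  have phim[measurable]: "\<phi> \<in> borel_measurable borel" by (rule borel_measurable_continuous_onI[OF phic])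
  have bddphi: "bdd_above (\<phi> ` {a..b})"
  proof (rule bdd_aboveI2[where M="\<phi> a + L * (b - a)"])
    fix r assume r: "r \<in> {a..b}"
    have "\<phi> r \<le> \<phi> a + L * \<bar>r - a\<bar>" using lipd[of r a] by linarith
    also have "L * \<bar>r - a\<bar> \<le> L * (b - a)" using r L0 by (intro mult_left_mono) auto
    finally show "\<phi> r \<le> \<phi> a + L * (b - a)" by simp
  qed
  have phimax: "\<phi> r \<le> \<Phi>" if "r \<in> {a..b}" for r
    unfolding \<Phi>_def by (rule cSUP_upper[OF that bddphi])
  have basic: "integrable M (\<lambda>\<omega>. \<phi> (Wnn Z K \<zeta> n \<omega>))"
    "integrable M (\<lambda>\<omega>. \<bar>Wnn Z K \<zeta> n \<omega> - S.Mn \<zeta> n \<omega>\<bar>)"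
    "(\<integral>\<omega>. \<bar>Wnn Z K \<zeta> n \<omega> - S.Mn \<zeta> n \<omega>\<bar> \<partial>M) \<le> R"
    if z: "\<zeta> \<in> SigmaTil M Z K lo hi" for \<zeta>
  proof -
    have Wi: "integrable M (Wnn Z K \<zeta> n)" by (rule S.W_int(1)[OF z n])
    have [measurable]: "Wnn Z K \<zeta> n \<in> borel_measurable M" using Wi by (rule borel_measurable_integrable)
    show "integrable M (\<lambda>\<omega>. \<phi> (Wnn Z K \<zeta> n \<omega>))"
    proof (rule integrable_dom)
      show "integrable M (\<lambda>\<omega>. \<bar>\<phi> 0\<bar> + L * \<bar>Wnn Z K \<zeta> n \<omega>\<bar>)" using Wi by simp
      fix \<omega> show "\<bar>\<phi> (Wnn Z K \<zeta> n \<omega>)\<bar> \<le> \<bar>\<phi> 0\<bar> + L * \<bar>Wnn Z K \<zeta> n \<omega>\<bar>"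
        using lipd[of "Wnn Z K \<zeta> n \<omega>" 0] by simp
    qed measurable
    show "integrable M (\<lambda>\<omega>. \<bar>Wnn Z K \<zeta> n \<omega> - S.Mn \<zeta> n \<omega>\<bar>)" by (rule S.W_int(2)[OF z n])
    show "(\<integral>\<omega>. \<bar>Wnn Z K \<zeta> n \<omega> - S.Mn \<zeta> n \<omega>\<bar> \<partial>M) \<le> R"
      unfolding R_def by (rule S.rate(3)[OF z n])
  qed
  have up: "E \<zeta> \<le> \<Phi> + L * R" if z: "\<zeta> \<in> SigmaTil M Z K lo hi" for \<zeta>
  proof -
    have pw: "\<phi> (Wnn Z K \<zeta> n \<omega>) \<le> \<Phi> + L * \<bar>Wnn Z K \<zeta> n \<omega> - S.Mn \<zeta> n \<omega>\<bar>" if \<omega>: "\<omega> \<in> space M" for \<omega>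
    proof -
      define w where "w = Wnn Z K \<zeta> n \<omega>"
      define m where "m = S.Mn \<zeta> n \<omega>"
      define r where "r = max a (min b w)"
      have m: "a \<le> m" "m \<le> b" using S.Mn_range[OF z n \<omega>] by (auto simp: m_def a_def b_def)
      have r: "r \<in> {a..b}" using ab by (auto simp: r_def)
      have "\<phi> w \<le> \<phi> r + L * \<bar>w - r\<bar>" using lipd[of w r] by linarith
      also have "L * \<bar>w - r\<bar> \<le> L * \<bar>w - m\<bar>" using m L0 by (intro mult_left_mono) (auto simp: r_def)
      finally show ?thesis using phimax[OF r] by (simp add: w_def m_def)
    qed
    have "E \<zeta> \<le> (\<integral>\<omega>. \<Phi> + L * \<bar>Wnn Z K \<zeta> n \<omega> - S.Mn \<zeta> n \<omega>\<bar> \<partial>M)"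
      unfolding E_def by (rule integral_mono) (use basic[OF z] pw in auto)
    also have "\<dots> = \<Phi> + L * (\<integral>\<omega>. \<bar>Wnn Z K \<zeta> n \<omega> - S.Mn \<zeta> n \<omega>\<bar> \<partial>M)"
      using basic(2)[OF z] by (simp add: S.prob_space)
    also have "\<dots> \<le> \<Phi> + L * R" using basic(3)[OF z] L0 by (simp add: mult_left_mono)
    finally show ?thesis .
  qed
  have bddE: "bdd_above (E ` SigmaTil M Z K lo hi)" by (rule bdd_aboveI2[where M="\<Phi> + L * R"]) (rule up)
  have supE: "(SUP \<zeta>\<in>SigmaTil M Z K lo hi. E \<zeta>) \<le> \<Phi> + L * R"
    by (rule cSUP_least[OF S.Sigma_ne up])
  have low: "\<phi> r \<le> (SUP \<zeta>\<in>SigmaTil M Z K lo hi. E \<zeta>) + L * R" if r: "r \<in> {a..b}" for r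
  proof -
    define c where "c = sqrt ((r - k2) / sigma2)"
    have q: "lo^2 \<le> (r - k2) / sigma2" "(r - k2) / sigma2 \<le> hi^2"
      using r sigma2 by (auto simp: a_def b_def field_simps)
    have q0: "0 \<le> (r - k2) / sigma2" using q(1) by (smt (verit) zero_le_power2)
    have c1: "lo \<le> c" unfolding c_def using q(1) by (rule real_le_rsqrt)
    have c2: "c \<le> hi" unfolding c_def using real_sqrt_le_mono[OF q(2)] zeta by simp
    have c3: "c^2 * sigma2 + k2 = r" unfolding c_def using q0 sigma2 by simp
    define \<zeta>0 where "\<zeta>0 = (\<lambda>(i::nat) (\<omega>::'a). c)"
    have z: "\<zeta>0 \<in> SigmaTil M Z K lo hi" unfolding \<zeta>0_def by (rule S.const_Sigma[OF c1 c2])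
    have Mr: "S.Mn \<zeta>0 n \<omega> = r" for \<omega>
      using n c3 by (simp add: S.Mn_def S.mm_def \<zeta>0_def)
    have "\<phi> r - L * R \<le> \<phi> r - L * (\<integral>\<omega>. \<bar>Wnn Z K \<zeta>0 n \<omega> - S.Mn \<zeta>0 n \<omega>\<bar> \<partial>M)"
      using basic(3)[OF z] L0 by (simp add: mult_left_mono)
    also have "\<dots> = (\<integral>\<omega>. \<phi> r - L * \<bar>Wnn Z K \<zeta>0 n \<omega> - S.Mn \<zeta>0 n \<omega>\<bar> \<partial>M)"
      using basic(2)[OF z] by (simp add: S.prob_space)
    also have "\<dots> \<le> E \<zeta>0"
      unfolding E_def
    proof (rule integral_mono)
      show "integrable M (\<lambda>\<omega>. \<phi> r - L * \<bar>Wnn Z K \<zeta>0 n \<omega> - S.Mn \<zeta>0 n \<omega>\<bar>)" using basic(2)[OF z] by simp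
      show "integrable M (\<lambda>\<omega>. \<phi> (Wnn Z K \<zeta>0 n \<omega>))" by (rule basic(1)[OF z])
      fix \<omega> show "\<phi> r - L * \<bar>Wnn Z K \<zeta>0 n \<omega> - S.Mn \<zeta>0 n \<omega>\<bar> \<le> \<phi> (Wnn Z K \<zeta>0 n \<omega>)"
        using lipd[of "Wnn Z K \<zeta>0 n \<omega>" r] unfolding Mr by (simp add: abs_minus_commute)
    qed
    also have "\<dots> \<le> (SUP \<zeta>\<in>SigmaTil M Z K lo hi. E \<zeta>)" by (rule cSUP_upper[OF z bddE])
    finally show ?thesis by simp
  qed
  have PhiE: "\<Phi> \<le> (SUP \<zeta>\<in>SigmaTil M Z K lo hi. E \<zeta>) + L * R"
    unfolding \<Phi>_def by (rule cSUP_least) (use ab low in auto)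
  have main: "\<bar>(SUP \<zeta>\<in>SigmaTil M Z K lo hi. E \<zeta>) - \<Phi>\<bar> \<le> L * R"
    using supE PhiE by linarith
  have c1: "\<bar>(SUP \<zeta>\<in>SigmaTil M Z K lo hi. (\<integral>\<omega>. \<phi> (Wnn Z K \<zeta> n \<omega>) \<partial>M))
           - (SUP r\<in>{sigma2 * lo^2 + k2 .. sigma2 * hi^2 + k2}. \<phi> r)\<bar>
         \<le> L * (4 * S.Ct / real n powr \<alpha>) powr (1 / (1 + \<alpha>))"
    using main unfolding E_def \<Phi>_def R_def a_def b_def .
  have c3: "S.Ct \<le> 8 * hi powr (2 + 2 * \<alpha>) * (\<integral>\<omega>. \<bar>Z 1 \<omega>\<bar> powr (2 + 2 * \<alpha>) \<partial>M)
             + 8 * (\<integral>\<omega>. \<bar>K 1 \<omega>\<bar> powr (2 + 2 * \<alpha>) \<partial>M)"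
    using S.Ct_le_Bd unfolding S.Bd_def .
  show ?thesis unfolding CtE using c1 S.Ct_bdd c3 by (intro conjI)
qed



end
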